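(* Assume (A1)–(A3). Consider mini-batch SGD with constant batch size $b_t=b$ for all $t$ and nonincreasing learning rates $\eta_{t+1}\le\eta_t$, with $\eta_t\in[\eta_{\min},\eta_{\max}]\subset[0,\frac2{\bar L})$ and $\sum_{t=0}^{T-1}\eta_t\ne0$. Then for all $T\in\mathbb N$, $$\min_{t\in[0:T-1]}\mathbb E\big[\|\nabla f(\theta_t)\|^2\big]\le\frac{2(f(\theta_0)-\underline f^\star)}{2-\bar L\eta_{\max}}B_T+\frac{\bar L\sigma^2}{2-\bar L\eta_{\max}}V_T,\qquad B_T=\frac{1}{\sum_{t=0}^{T-1}\eta_t},\quad V_T=\frac{\sum_{t=0}^{T-1}\eta_t^2}{b\sum_{t=0}^{T-1}\eta_t},$$ and, for the following learning rate schedules (with $p>0$, $E\in\mathbb N$, $K=\lceil n/b\rceil$, $0\le\eta_{\min}\le\eta_{\max}$, and $T=KE$ in the cosine case): (Constant) $\eta_t=\eta_{\max}$: $B_T\le\frac1{\eta_{\max}T}$, $V_T\le\frac{\eta_{\max}}{b}$; (Diminishing) $\eta_t=\frac{\eta_{\max}}{\sqrt{t+1}}$: $B_T\le\frac1{2\eta_{\max}(\sqrt{T+1}-1)}$, $V_T\le\frac{\eta_{\max}(1+\log T)}{2b(\sqrt{T+1}-1)}$; (Cosine) $\eta_t=\eta_{\min}+\frac{\eta_{\max}-\eta_{\min}}2\big(1+\cos\big(\lfloor t/K\rfloor\frac{\pi}{E}\big)\big)$: $B_T\le\frac2{(\eta_{\min}+\eta_{\max})T}$, $V_T\le\frac{3\eta_{\min}^2+2\eta_{\min}\eta_{\max}+3\eta_{\max}^2}{4(\eta_{\min}+\eta_{\max})b}+\frac{(\eta_{\max}-\eta_{\min})K}{bT}$;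 (Polynomial) $\eta_t=(\eta_{\max}-\eta_{\min})(1-\frac tT)^p+\eta_{\min}$: $B_T\le\frac{p+1}{(p\eta_{\min}+\eta_{\max})T}$, $V_T\le\frac{2p^2\eta_{\min}^2+2p\eta_{\min}\eta_{\max}+(p+1)\eta_{\max}^2}{(2p+1)(p\eta_{\min}+\eta_{\max})b}+\frac{(p+1)(\eta_{\max}^2-\eta_{\min}^2)}{(p\eta_{\min}+\eta_{\max})bT}$.
   Context: Let $n,d\in\mathbb N$, $f_1,\dots,f_n:\mathbb R^d\to\mathbb R$, $f=\frac1n\sum_{i=1}^nf_i$. (A1) each $f_i$ is differentiable and $L_i$-smooth ($\nabla f_i$ is $L_i$-Lipschitz, $L_i>0$), and $f_i^\star:=\inf_\theta f_i(\theta)\in\mathbb R$. (A2) $\xi$ is a random variable independent of $\theta$, and the stochastic gradient $\nabla f_\xi$ satisfies $\mathbb E_\xi[\nabla f_\xi(\theta)]=\nabla f(\theta)$ and $\mathbb E_\xi\|\nabla f_\xi(\theta)-\nabla f(\theta)\|^2\le\sigma^2$ for all $\theta$, some $\sigma\ge0$. (A3) for batch size $b$, $(\xi_1,\dots,\xi_b)$ are i.i.d. copies of $\xi$ independent of $\theta$, and $\nabla f_B(\theta)=\frac1b\sum_{i=1}^b\nabla f_{\xi_i}(\theta)$. Mini-batch SGD: from $\theta_0\in\mathbb R^d$, at step $t$ draw $\xi_t=(\xi_{t,1},\dots,\xi_{t,b_t})$ as in (A3), independent of $\theta_t$ and of earlier draws, and set $\theta_{t+1}=\theta_t-\eta_t\frac1{b_t}\sum_{i=1}^{b_t}\nabla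 f_{\xi_{t,i}}(\theta_t)$. $\mathbb E$ is total expectation. $\bar L=\frac1n\sum_iL_i$, $\underline f^\star=\frac1n\sum_if_i^\star$, $[0:N]=\{0,\dots,N\}$, $n$ is the number of training samples. *)

theory Defs
  imports "HOL-Probability.Probability"
begin

definition grad :: "('a::euclidean_space \<Rightarrow> real) \<Rightarrow> 'a \<Rightarrow> 'a" where
  "grad f x = (THE g. (f has_derivative (\<lambda>h. g \<bullet> h)) (at x))"

definition L_smooth :: "('a::euclidean_space \<Rightarrow> real) \<Rightarrow> real \<Rightarrow> bool" where
  "L_smooth f L \<longleftrightarrow> (\<forall>x. f differentiable (at x)) \<and>
     (\<forall>x y. norm (grad f x - grad f y) \<le> L * norm (x - y))"

fun sgd_iter :: "'a::real_vector \<Rightarrow> (nat \<Rightarrow> real) \<Rightarrow> nat \<Rightarrow> ('b \<Rightarrow> 'a \<Rightarrow> 'a)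
     \<Rightarrow> (nat \<Rightarrow> nat \<Rightarrow> 'w \<Rightarrow> 'b) \<Rightarrow> nat \<Rightarrow> 'w \<Rightarrow> 'a" where
  "sgd_iter \<theta>0 \<eta> b G \<xi> 0 \<omega> = \<theta>0"
| "sgd_iter \<theta>0 \<eta> b G \<xi> (Suc t) \<omega> =
     sgd_iter \<theta>0 \<eta> b G \<xi> t \<omega>
     - \<eta> t *\<^sub>R ((1 / real b) *\<^sub>R (\<Sum>i<b. G (\<xi> t i \<omega>) (sgd_iter \<theta>0 \<eta> b G \<xi> t \<omega>)))"

definition B_T :: "(nat \<Rightarrow> real) \<Rightarrow> nat \<Rightarrow> real" where
  "B_T \<eta> T = 1 / (\<Sum>t<T. \<eta> t)"

definition V_T :: "(nat \<Rightarrow> real) \<Rightarrow> nat \<Rightarrow> nat \<Rightarrow> real" where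
  "V_T \<eta> b T = (\<Sum>t<T. (\<eta> t)\<^sup>2) / (real b * (\<Sum>t<T. \<eta> t))"

definition const_lr :: "real \<Rightarrow> nat \<Rightarrow> real" where
  "const_lr hmax t = hmax"

definition dimin_lr :: "real \<Rightarrow> nat \<Rightarrow> real" where
  "dimin_lr hmax t = hmax / sqrt (real t + 1)"

definition cosine_lr :: "real \<Rightarrow> real \<Rightarrow> nat \<Rightarrow> nat \<Rightarrow> nat \<Rightarrow> real" where
  "cosine_lr hmin hmax K E t =
     hmin + (hmax - hmin) / 2 * (1 + cos (real (t div K) * pi / real E))"

definition poly_lr :: "real \<Rightarrow> real \<Rightarrow> real \<Rightarrow> nat \<Rightarrow> nat \<Rightarrow> real" where
  "poly_lr hmin hmax p T t = (hmax - hmin) * (1 - real t / real T) powr p + hmin"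

end

theory Submission
  imports Defs "HOL-Analysis.Harmonic_Numbers"
begin


lemma grad_unique:
  fixes g :: "'a::euclidean_space \<Rightarrow> real"
  assumes "(g has_derivative (\<lambda>h. v \<bullet> h)) (at x)"
  shows "grad g x = v"
  unfolding grad_def
proof (rule the_equality)
  show "(g has_derivative (\<lambda>h. v \<bullet> h)) (at x)" by fact
next
  fix w assume "(g has_derivative (\<lambda>h. w \<bullet> h)) (at x)"
  with assms have "(\<lambda>h. w \<bullet> h) = (\<lambda>h. v \<bullet> h)" by (rule has_derivative_unique[rotated])
  then have "w \<bullet> (w - v) = v \<bullet> (w - v)" by metis
  then have "(w - v) \<bullet> (w - v) = 0" by (simp add: inner_diff_left)
  then show "w = v" by simp
qed

lemma linear_functional_repr:
  fixes D :: "'a::euclidean_space \<Rightarrow> real"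
  assumes "linear D"
  shows "D h = (\<Sum>b\<in>Basis. D b *\<^sub>R b) \<bullet> h"
proof -
  have "D h = D (\<Sum>b\<in>Basis. (h \<bullet> b) *\<^sub>R b)" by (simp add: euclidean_representation)
  also have "\<dots> = (\<Sum>b\<in>Basis. (h \<bullet> b) * D b)"
    using assms by (simp add: linear_sum linear_scale)
  also have "\<dots> = (\<Sum>b\<in>Basis. D b * (b \<bullet> h))"
    by (intro sum.cong refl) (simp add: inner_commute)
  also have "\<dots> = (\<Sum>b\<in>Basis. D b *\<^sub>R b) \<bullet> h"
    by (simp add: inner_sum_left)
  finally show ?thesis .
qed

lemma grad_has_derivative:
  fixes g :: "'a::euclidean_space \<Rightarrow> real"
  assumes "g differentiable (at x)"
  shows "(g has_derivative (\<lambda>h. grad g x \<bullet> h)) (at x)"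
proof -
  obtain D where D: "(g has_derivative D) (at x)" using assms by (auto simp: differentiable_def)
  then have lin: "linear D" by (simp add: has_derivative_linear)
  define v where "v = (\<Sum>b\<in>Basis. D b *\<^sub>R b)"
  have "D = (\<lambda>h. v \<bullet> h)" unfolding v_def by (rule ext, rule linear_functional_repr[OF lin])
  with D have "(g has_derivative (\<lambda>h. v \<bullet> h)) (at x)" by simp
  moreover then have "grad g x = v" by (rule grad_unique)
  ultimately show ?thesis by simp
qed

lemma descent_lemma:
  fixes g :: "'a::euclidean_space \<Rightarrow> real"
  assumes dif: "\<forall>x. g differentiable (at x)"
    and lip: "\<forall>x y. norm (grad g x - grad g y) \<le> L * norm (x - y)"
  shows "g y \<le> g x + grad g x \<bullet> (y - x) + L / 2 * (norm (y - x))\<^sup>2"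
proof -
  define d where "d = y - x"
  define phi where "phi = (\<lambda>s::real. g (x + s *\<^sub>R d) - s * (grad g x \<bullet> d) - L / 2 * s\<^sup>2 * (norm d)\<^sup>2)"
  have der: "(phi has_real_derivative
      (grad g (x + s *\<^sub>R d) \<bullet> d - grad g x \<bullet> d - L * s * (norm d)\<^sup>2)) (at s)" for s
  proof -
    have l: "((\<lambda>s. x + s *\<^sub>R d) has_derivative (\<lambda>t. t *\<^sub>R d)) (at s)"
      by (auto intro!: derivative_eq_intros)
    have g': "(g has_derivative (\<lambda>h. grad g (x + s *\<^sub>R d) \<bullet> h)) (at (x + s *\<^sub>R d))"
      using dif by (simp add: grad_has_derivative)
    have "((\<lambda>s. g (x + s *\<^sub>R d)) has_derivative (\<lambda>t. grad g (x + s *\<^sub>R d) \<bullet> (t *\<^sub>R d))) (at s)"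
      using diff_chain_at[OF l g'] by (simp add: o_def)
    moreover have "(\<lambda>t. grad g (x + s *\<^sub>R d) \<bullet> (t *\<^sub>R d)) = (*) (grad g (x + s *\<^sub>R d) \<bullet> d)"
      by (rule ext) simp
    ultimately have c: "((\<lambda>s. g (x + s *\<^sub>R d)) has_real_derivative (grad g (x + s *\<^sub>R d) \<bullet> d)) (at s)"
      unfolding has_field_derivative_def by simp
    have c2: "((\<lambda>s. s * (grad g x \<bullet> d)) has_real_derivative (grad g x \<bullet> d)) (at s)"
      using DERIV_cmult_right[OF DERIV_ident, of "grad g x \<bullet> d" s] by simp
    have c3: "((\<lambda>s. L / 2 * s\<^sup>2 * (norm d)\<^sup>2) has_real_derivative (L * s * (norm d)\<^sup>2)) (at s)"
    proof -
      have "((\<lambda>s. s\<^sup>2) has_real_derivative (2 * s)) (at s)"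
        using DERIV_pow[of 2 s] by simp
      from DERIV_cmult[OF DERIV_cmult_right[OF this, of "(norm d)\<^sup>2"], of "L/2"]
      show ?thesis by (simp add: mult.assoc)
    qed
    show ?thesis unfolding phi_def
      by (intro DERIV_diff c c2 c3)
  qed
  have nonpos: "grad g (x + s *\<^sub>R d) \<bullet> d - grad g x \<bullet> d - L * s * (norm d)\<^sup>2 \<le> 0" if "0 \<le> s" for s
  proof -
    have "grad g (x + s *\<^sub>R d) \<bullet> d - grad g x \<bullet> d = (grad g (x + s *\<^sub>R d) - grad g x) \<bullet> d"
      by (simp add: inner_diff_left)
    also have "\<dots> \<le> norm (grad g (x + s *\<^sub>R d) - grad g x) * norm d" by (rule norm_cauchy_schwarz)
    also have "\<dots> \<le> (L * norm (s *\<^sub>R d)) * norm d"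
    proof (rule mult_right_mono)
      have "norm (grad g (x + s *\<^sub>R d) - grad g x) \<le> L * norm ((x + s *\<^sub>R d) - x)"
        using lip by blast
      then show "norm (grad g (x + s *\<^sub>R d) - grad g x) \<le> L * norm (s *\<^sub>R d)" by simp
    qed simp
    also have "\<dots> = L * s * (norm d)\<^sup>2" using that by (simp add: power2_eq_square)
    finally show ?thesis by simp
  qed
  have "phi 1 \<le> phi 0"
  proof -
    have "\<forall>s. 0 \<le> s \<and> s \<le> 1 \<longrightarrow> (\<exists>y. (phi has_real_derivative y) (at s) \<and> y \<le> 0)"
      using der nonpos by blast
    then show ?thesis by (intro DERIV_nonpos_imp_nonincreasing[of 0 1 phi]) auto
  qed
  then show ?thesis by (simp add: phi_def d_def)
qed




locale sgd =
  fixes P :: "'w measure" and D :: "'b measure" and b :: nat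
    and G :: "'b \<Rightarrow> 'a::euclidean_space \<Rightarrow> 'a" and \<xi> :: "nat \<Rightarrow> nat \<Rightarrow> 'w \<Rightarrow> 'b"
    and F :: "'a \<Rightarrow> real" and Lb Fmin \<sigma> :: real
  assumes P: "prob_space P" and b: "b \<ge> 1"
    and G_meas: "(\<lambda>(x, \<theta>). G x \<theta>) \<in> borel_measurable (D \<Otimes>\<^sub>M borel)"
    and unb: "\<forall>\<theta>. integrable D (\<lambda>x. G x \<theta>) \<and> (\<integral>x. G x \<theta> \<partial>D) = grad F \<theta>"
    and var: "\<forall>\<theta>. integrable D (\<lambda>x. (norm (G x \<theta> - grad F \<theta>))\<^sup>2)
                 \<and> (\<integral>x. (norm (G x \<theta> - grad F \<theta>))\<^sup>2 \<partial>D) \<le> \<sigma>\<^sup>2"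
    and indep: "prob_space.indep_vars P (\<lambda>_. D) (\<lambda>(t, i). \<xi> t i) (UNIV \<times> {..<b})"
    and distr_eq: "\<forall>t. \<forall>i<b. distr P D (\<xi> t i) = D"
    and Fdiff: "\<forall>x. F differentiable (at x)"
    and Flip: "\<forall>x y. norm (grad F x - grad F y) \<le> Lb * norm (x - y)"
    and Fmin: "\<forall>x. Fmin \<le> F x"
    and Lb: "Lb \<ge> 0"
begin

sublocale prob_space P by (rule P)

lemma xi_meas: "i < b \<Longrightarrow> \<xi> t i \<in> measurable P D"
  using indep unfolding indep_vars_def by auto

lemma G_comp_meas:
  assumes "X \<in> measurable M D" "Y \<in> borel_measurable M"
  shows "(\<lambda>\<omega>. G (X \<omega>) (Y \<omega>)) \<in> borel_measurable M"
proof -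
  have "(\<lambda>\<omega>. (X \<omega>, Y \<omega>)) \<in> measurable M (D \<Otimes>\<^sub>M borel)" using assms by (rule measurable_Pair)
  from measurable_compose[OF this G_meas] show ?thesis by simp
qed

lemma G_meas1: "(\<lambda>x. G x \<theta>) \<in> borel_measurable D"
  using G_comp_meas[of "\<lambda>x. x" D "\<lambda>_. \<theta>"] by simp

lemma PW:
  assumes eta: "0 \<le> \<eta>" and c: "0 \<le> \<eta> * (1 - Lb * \<eta> / 2)"
  shows "(\<integral>\<^sup>+\<omega>. ennreal (F (\<theta> - \<eta> *\<^sub>R ((1 / real b) *\<^sub>R (\<Sum>i<b. G (\<xi> t i \<omega>) \<theta>))) - Fmin) \<partial>P)
       + ennreal (\<eta> * (1 - Lb * \<eta> / 2) * (norm (grad F \<theta>))\<^sup>2)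
     \<le> ennreal (F \<theta> - Fmin + Lb * \<eta>\<^sup>2 * \<sigma>\<^sup>2 / (2 * real b))"
proof -
  define g where "g = grad F \<theta>"
  define Z where "Z = (\<lambda>i \<omega>. G (\<xi> t i \<omega>) \<theta> - g)"
  define W where "W = (\<lambda>\<omega>. (1 / real b) *\<^sub>R (\<Sum>i<b. Z i \<omega>))"
  have bpos: "real b > 0" using b by simp
  have S_eq: "(1 / real b) *\<^sub>R (\<Sum>i<b. G (\<xi> t i \<omega>) \<theta>) = g + W \<omega>" for \<omega>
  proof -
    have "(\<Sum>i<b. G (\<xi> t i \<omega>) \<theta>) = (\<Sum>i<b. Z i \<omega>) + real b *\<^sub>R g"
      by (simp add: Z_def sum_subtractf sum_constant_scaleR)
    then show ?thesis using bpos by (simp add: W_def scaleR_add_right)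
  qed
  have Zint: "integrable P (Z i)" and Zmean: "(\<integral>\<omega>. Z i \<omega> \<partial>P) = 0" if "i < b" for i
  proof -
    have m: "\<xi> t i \<in> measurable P D" by (rule xi_meas[OF that])
    have d: "distr P D (\<xi> t i) = D" using distr_eq that by auto
    have "integrable (distr P D (\<xi> t i)) (\<lambda>x. G x \<theta>)" using unb d by simp
    then have iY: "integrable P (\<lambda>\<omega>. G (\<xi> t i \<omega>) \<theta>)" using integrable_distr_eq[OF m G_meas1] by simp
    then show "integrable P (Z i)" unfolding Z_def by simp
    have "(\<integral>\<omega>. G (\<xi> t i \<omega>) \<theta> \<partial>P) = (\<integral>x. G x \<theta> \<partial>(distr P D (\<xi> t i)))"
      using integral_distr[OF m G_meas1] by simp
    also have "\<dots> = g" using unb d g_def by simp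
    finally show "(\<integral>\<omega>. Z i \<omega> \<partial>P) = 0" unfolding Z_def using iY by (simp add: prob_space)
  qed
  have Zsq_int: "integrable P (\<lambda>\<omega>. (norm (Z i \<omega>))\<^sup>2)"
    and Zsq: "(\<integral>\<omega>. (norm (Z i \<omega>))\<^sup>2 \<partial>P) \<le> \<sigma>\<^sup>2" if "i < b" for i
  proof -
    have m: "\<xi> t i \<in> measurable P D" by (rule xi_meas[OF that])
    have d: "distr P D (\<xi> t i) = D" using distr_eq that by auto
    have hm: "(\<lambda>x. (norm (G x \<theta> - g))\<^sup>2) \<in> borel_measurable D"
      using G_meas1 by measurable
    have "integrable (distr P D (\<xi> t i)) (\<lambda>x. (norm (G x \<theta> - g))\<^sup>2)" using var d g_def by simp
    then show "integrable P (\<lambda>\<omega>. (norm (Z i \<omega>))\<^sup>2)"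
      using integrable_distr_eq[OF m hm] by (simp add: Z_def)
    have "(\<integral>\<omega>. (norm (Z i \<omega>))\<^sup>2 \<partial>P) = (\<integral>x. (norm (G x \<theta> - g))\<^sup>2 \<partial>(distr P D (\<xi> t i)))"
      using integral_distr[OF m hm] by (simp add: Z_def)
    also have "\<dots> \<le> \<sigma>\<^sup>2" using var d g_def by simp
    finally show "(\<integral>\<omega>. (norm (Z i \<omega>))\<^sup>2 \<partial>P) \<le> \<sigma>\<^sup>2" .
  qed
  have cross: "integrable P (\<lambda>\<omega>. Z i \<omega> \<bullet> Z j \<omega>) \<and> (\<integral>\<omega>. Z i \<omega> \<bullet> Z j \<omega> \<partial>P) = 0"
    if ij: "i < b" "j < b" "i \<noteq> j" for i j
  proof -
    have ind: "indep_var (PiM {(t,i)} (\<lambda>_. D)) (\<lambda>\<omega>. restrict (\<lambda>k. (\<lambda>(t, i). \<xi> t i) k \<omega>) {(t,i)})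
                 (PiM {(t,j)} (\<lambda>_. D)) (\<lambda>\<omega>. restrict (\<lambda>k. (\<lambda>(t, i). \<xi> t i) k \<omega>) {(t,j)})"
      using ij by (intro indep_var_restrict[OF indep]) auto
    have comp: "indep_var borel (\<lambda>\<omega>. Z i \<omega> \<bullet> e) borel (\<lambda>\<omega>. Z j \<omega> \<bullet> e)" for e
    proof -
      have m1: "(\<lambda>x. (G (x (t,i)) \<theta> - g) \<bullet> e) \<in> borel_measurable (PiM {(t,i)} (\<lambda>_. D))"
        using measurable_compose[OF measurable_component_singleton[of "(t,i)" "{(t,i)}" "\<lambda>_. D"] G_meas1]
        by measurable
      have m2: "(\<lambda>x. (G (x (t,j)) \<theta> - g) \<bullet> e) \<in> borel_measurable (PiM {(t,j)} (\<lambda>_. D))"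
        using measurable_compose[OF measurable_component_singleton[of "(t,j)" "{(t,j)}" "\<lambda>_. D"] G_meas1]
        by measurable
      from indep_var_compose[OF ind m1 m2] show ?thesis by (simp add: o_def Z_def)
    qed
    have each: "integrable P (\<lambda>\<omega>. (Z i \<omega> \<bullet> e) * (Z j \<omega> \<bullet> e)) \<and> (\<integral>\<omega>. (Z i \<omega> \<bullet> e) * (Z j \<omega> \<bullet> e) \<partial>P) = 0" for e
    proof -
      have i1: "integrable P (\<lambda>\<omega>. Z i \<omega> \<bullet> e)" using Zint ij by simp
      have i2: "integrable P (\<lambda>\<omega>. Z j \<omega> \<bullet> e)" using Zint ij by simp
      have "(\<integral>\<omega>. Z i \<omega> \<bullet> e \<partial>P) = 0" using Zmean Zint ij by simp
      then show ?thesis using indep_var_lebesgue_integral[OF comp i1 i2] indep_var_integrable[OF comp i1 i2] by simp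
    qed
    have eq: "(\<lambda>\<omega>. Z i \<omega> \<bullet> Z j \<omega>) = (\<lambda>\<omega>. \<Sum>e\<in>Basis. (Z i \<omega> \<bullet> e) * (Z j \<omega> \<bullet> e))"
      by (rule ext, rule euclidean_inner)
    show ?thesis unfolding eq using each by (simp add: Bochner_Integration.integral_sum)
  qed
  have ZZ: "integrable P (\<lambda>\<omega>. Z i \<omega> \<bullet> Z j \<omega>) \<and> (\<integral>\<omega>. Z i \<omega> \<bullet> Z j \<omega> \<partial>P) = (if j = i then \<integral>\<omega>. (norm (Z i \<omega>))\<^sup>2 \<partial>P else 0)"
    if ij: "i < b" "j < b" for i j
  proof (cases "i = j")
    case True
    have "(\<lambda>\<omega>. Z i \<omega> \<bullet> Z i \<omega>) = (\<lambda>\<omega>. (norm (Z i \<omega>))\<^sup>2)" by (simp add: power2_norm_eq_inner)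
    then show ?thesis using True Zsq_int ij by simp
  next
    case False then show ?thesis using cross ij by auto
  qed
  have WW: "(norm (W \<omega>))\<^sup>2 = (1 / real b)\<^sup>2 * (\<Sum>i<b. \<Sum>j<b. Z i \<omega> \<bullet> Z j \<omega>)" for \<omega>
  proof -
    have "(norm (W \<omega>))\<^sup>2 = (1 / real b)\<^sup>2 * ((\<Sum>i<b. Z i \<omega>) \<bullet> (\<Sum>j<b. Z j \<omega>))"
      unfolding power2_norm_eq_inner W_def by (simp add: power2_eq_square)
    also have "(\<Sum>i<b. Z i \<omega>) \<bullet> (\<Sum>j<b. Z j \<omega>) = (\<Sum>i<b. \<Sum>j<b. Z i \<omega> \<bullet> Z j \<omega>)"
      unfolding inner_sum_left by (simp only: inner_sum_right)
    finally show ?thesis .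
  qed
  have WWint: "integrable P (\<lambda>\<omega>. (norm (W \<omega>))\<^sup>2)"
  proof -
    have "integrable P (\<lambda>\<omega>. \<Sum>i<b. \<Sum>j<b. Z i \<omega> \<bullet> Z j \<omega>)"
      by (rule Bochner_Integration.integrable_sum, rule Bochner_Integration.integrable_sum) (use ZZ in auto)
    then show ?thesis unfolding WW by (rule integrable_mult_right)
  qed
  have WWle: "(\<integral>\<omega>. (norm (W \<omega>))\<^sup>2 \<partial>P) \<le> \<sigma>\<^sup>2 / real b"
  proof -
    have "(\<integral>\<omega>. (norm (W \<omega>))\<^sup>2 \<partial>P) = (1 / real b)\<^sup>2 * (\<Sum>i<b. \<Sum>j<b. \<integral>\<omega>. Z i \<omega> \<bullet> Z j \<omega> \<partial>P)"
    proof -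
      have e2: "(\<integral>\<omega>. (\<Sum>j<b. Z i \<omega> \<bullet> Z j \<omega>) \<partial>P) = (\<Sum>j<b. \<integral>\<omega>. Z i \<omega> \<bullet> Z j \<omega> \<partial>P)"
        if "i < b" for i
        by (rule Bochner_Integration.integral_sum) (use ZZ that in auto)
      have e1: "(\<integral>\<omega>. (\<Sum>i<b. \<Sum>j<b. Z i \<omega> \<bullet> Z j \<omega>) \<partial>P) = (\<Sum>i<b. \<integral>\<omega>. (\<Sum>j<b. Z i \<omega> \<bullet> Z j \<omega>) \<partial>P)"
        by (rule Bochner_Integration.integral_sum, rule Bochner_Integration.integrable_sum) (use ZZ in auto)
      show ?thesis unfolding WW integral_mult_right_zero e1 using e2 by simp
    qed
    also have "\<dots> = (1 / real b)\<^sup>2 * (\<Sum>i<b. \<integral>\<omega>. (norm (Z i \<omega>))\<^sup>2 \<partial>P)"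
      using ZZ by (simp add: sum.delta)
    also have "\<dots> \<le> (1 / real b)\<^sup>2 * (\<Sum>i<b. \<sigma>\<^sup>2)"
      using Zsq by (intro mult_left_mono sum_mono) auto
    also have "\<dots> = \<sigma>\<^sup>2 / real b" using bpos by (simp add: power2_eq_square)
    finally show ?thesis .
  qed
  have Wint: "integrable P W" unfolding W_def
    by (intro integrable_scaleR_right Bochner_Integration.integrable_sum) (use Zint in auto)
  have gW: "(\<integral>\<omega>. g \<bullet> W \<omega> \<partial>P) = 0"
  proof -
    have "(\<integral>\<omega>. W \<omega> \<partial>P) = (1 / real b) *\<^sub>R (\<Sum>i<b. \<integral>\<omega>. Z i \<omega> \<partial>P)"
      unfolding W_def using Zint by (simp add: Bochner_Integration.integral_sum)
    also have "\<dots> = 0" using Zmean by simp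
    finally show ?thesis using Wint by simp
  qed
  define K0 where "K0 = F \<theta> - \<eta> * (norm g)\<^sup>2 + Lb * \<eta>\<^sup>2 / 2 * (norm g)\<^sup>2"
  define K1 where "K1 = Lb * \<eta>\<^sup>2 - \<eta>"
  define K2 where "K2 = Lb * \<eta>\<^sup>2 / 2"
  define R where "R = (\<lambda>\<omega>. K0 + K1 * (g \<bullet> W \<omega>) + K2 * (norm (W \<omega>))\<^sup>2)"
  have pt: "F (\<theta> - \<eta> *\<^sub>R (g + W \<omega>)) \<le> R \<omega>" for \<omega>
  proof -
    have "F (\<theta> - \<eta> *\<^sub>R (g + W \<omega>)) \<le> F \<theta> + grad F \<theta> \<bullet> ((\<theta> - \<eta> *\<^sub>R (g + W \<omega>)) - \<theta>)
            + Lb / 2 * (norm ((\<theta> - \<eta> *\<^sub>R (g + W \<omega>)) - \<theta>))\<^sup>2"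
      by (rule descent_lemma[OF Fdiff Flip])
    also have "\<dots> = R \<omega>"
      unfolding R_def K0_def K1_def K2_def g_def[symmetric] power2_norm_eq_inner
      by (simp add: inner_add_left inner_add_right inner_diff_left inner_diff_right inner_commute power2_eq_square algebra_simps)
    finally show ?thesis .
  qed
  have Rint: "integrable P R" unfolding R_def using Wint WWint by auto
  have Rval: "(\<integral>\<omega>. R \<omega> \<partial>P) = K0 + K2 * (\<integral>\<omega>. (norm (W \<omega>))\<^sup>2 \<partial>P)"
    unfolding R_def using Wint WWint gW by (simp add: prob_space)
  have K2: "K2 \<ge> 0" using Lb by (simp add: K2_def)
  have Rle: "(\<integral>\<omega>. R \<omega> \<partial>P) \<le> F \<theta> - \<eta> * (1 - Lb * \<eta> / 2) * (norm g)\<^sup>2 + Lb * \<eta>\<^sup>2 * \<sigma>\<^sup>2 / (2 * real b)"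
  proof -
    have "K2 * (\<integral>\<omega>. (norm (W \<omega>))\<^sup>2 \<partial>P) \<le> K2 * (\<sigma>\<^sup>2 / real b)"
      using WWle K2 by (rule mult_left_mono)
    then show ?thesis unfolding Rval K0_def K2_def by (simp add: algebra_simps power2_eq_square)
  qed
  have Rge: "Fmin \<le> R \<omega>" for \<omega> using pt[of \<omega>] Fmin by (metis order_trans)
  have "(\<integral>\<^sup>+\<omega>. ennreal (F (\<theta> - \<eta> *\<^sub>R ((1 / real b) *\<^sub>R (\<Sum>i<b. G (\<xi> t i \<omega>) \<theta>))) - Fmin) \<partial>P)
        \<le> (\<integral>\<^sup>+\<omega>. ennreal (R \<omega> - Fmin) \<partial>P)"
    unfolding S_eq using pt by (intro nn_integral_mono ennreal_leI) (simp add: algebra_simps)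
  also have "\<dots> = ennreal (\<integral>\<omega>. R \<omega> - Fmin \<partial>P)"
    using Rint Rge by (intro nn_integral_eq_integral) auto
  also have "(\<integral>\<omega>. R \<omega> - Fmin \<partial>P) = (\<integral>\<omega>. R \<omega> \<partial>P) - Fmin"
    using Rint by (simp add: prob_space)
  finally have I1: "(\<integral>\<^sup>+\<omega>. ennreal (F (\<theta> - \<eta> *\<^sub>R ((1 / real b) *\<^sub>R (\<Sum>i<b. G (\<xi> t i \<omega>) \<theta>))) - Fmin) \<partial>P)
        \<le> ennreal ((\<integral>\<omega>. R \<omega> \<partial>P) - Fmin)" .
  have I0: "0 \<le> (\<integral>\<omega>. R \<omega> \<partial>P) - Fmin"
  proof -
    have "Fmin \<le> (\<integral>\<omega>. R \<omega> \<partial>P)"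
      using integral_mono[OF _ Rint, of "\<lambda>_. Fmin"] Rge by (simp add: prob_space)
    then show ?thesis by simp
  qed
  have cg: "0 \<le> \<eta> * (1 - Lb * \<eta> / 2) * (norm g)\<^sup>2" using c by simp
  have "(\<integral>\<^sup>+\<omega>. ennreal (F (\<theta> - \<eta> *\<^sub>R ((1 / real b) *\<^sub>R (\<Sum>i<b. G (\<xi> t i \<omega>) \<theta>))) - Fmin) \<partial>P)
       + ennreal (\<eta> * (1 - Lb * \<eta> / 2) * (norm g)\<^sup>2)
       \<le> ennreal ((\<integral>\<omega>. R \<omega> \<partial>P) - Fmin) + ennreal (\<eta> * (1 - Lb * \<eta> / 2) * (norm g)\<^sup>2)"
    using I1 by (rule add_right_mono)
  also have "\<dots> = ennreal ((\<integral>\<omega>. R \<omega> \<partial>P) - Fmin + \<eta> * (1 - Lb * \<eta> / 2) * (norm g)\<^sup>2)"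
    using I0 cg by (simp add: ennreal_plus)
  also have "\<dots> \<le> ennreal (F \<theta> - Fmin + Lb * \<eta>\<^sup>2 * \<sigma>\<^sup>2 / (2 * real b))"
    using Rle by (intro ennreal_leI) simp
  finally show ?thesis unfolding g_def .
qed

end



lemma sgd_cong:
  assumes "\<forall>s<t. \<forall>i<b. \<xi>1 s i \<omega>1 = \<xi>2 s i \<omega>2"
  shows "sgd_iter \<theta>0 \<eta> b G \<xi>1 t \<omega>1 = sgd_iter \<theta>0 \<eta> b G \<xi>2 t \<omega>2"
  using assms
proof (induction t)
  case 0 then show ?case by simp
next
  case (Suc t)
  then have IH: "sgd_iter \<theta>0 \<eta> b G \<xi>1 t \<omega>1 = sgd_iter \<theta>0 \<eta> b G \<xi>2 t \<omega>2" by simp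
  have "(\<Sum>i<b. G (\<xi>1 t i \<omega>1) (sgd_iter \<theta>0 \<eta> b G \<xi>1 t \<omega>1)) = (\<Sum>i<b. G (\<xi>2 t i \<omega>2) (sgd_iter \<theta>0 \<eta> b G \<xi>2 t \<omega>2))"
    using Suc.prems IH by (intro sum.cong) auto
  then show ?case using IH by simp
qed

context sgd
begin

lemma F_cont: "continuous_on UNIV F"
proof -
  have "F differentiable_on UNIV" using Fdiff by (auto simp: differentiable_on_def differentiable_at_withinI)
  then show ?thesis by (rule differentiable_imp_continuous_on)
qed

lemma gradF_cont: "continuous_on UNIV (grad F)"
proof (cases "Lb = 0")
  case True
  then have "grad F x = grad F y" for x y using Flip by (metis norm_le_zero_iff mult_zero_left right_minus_eq)
  then have "grad F = (\<lambda>_. grad F 0)" by auto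
  then show ?thesis by (metis continuous_on_const)
next
  case False
  have "Lb-lipschitz_on UNIV (grad F)"
    by (rule lipschitz_onI) (use Flip Lb in \<open>auto simp: dist_norm\<close>)
  then show ?thesis by (rule lipschitz_on_continuous_on)
qed

lemma F_meas[measurable]: "F \<in> borel_measurable borel"
  using F_cont by (rule borel_measurable_continuous_onI)

lemma gradF_meas[measurable]: "grad F \<in> borel_measurable borel"
  using gradF_cont by (rule borel_measurable_continuous_onI)

lemma sgd_meas:
  assumes "\<forall>s<t. \<forall>i<b. \<xi>' s i \<in> measurable M D"
  shows "sgd_iter \<theta>0 \<eta> b G \<xi>' t \<in> borel_measurable M"
  using assms
proof (induction t)
  case 0 then show ?case by simp
next
  case (Suc t)
  then have IH: "sgd_iter \<theta>0 \<eta> b G \<xi>' t \<in> borel_measurable M" by simp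
  have c: "(\<lambda>\<omega>. G (\<xi>' t i \<omega>) (sgd_iter \<theta>0 \<eta> b G \<xi>' t \<omega>)) \<in> borel_measurable M" if "i < b" for i
    using Suc.prems that IH by (intro G_comp_meas) auto
  have s: "(\<lambda>\<omega>. \<Sum>i<b. G (\<xi>' t i \<omega>) (sgd_iter \<theta>0 \<eta> b G \<xi>' t \<omega>)) \<in> borel_measurable M"
    using c by (intro borel_measurable_sum) auto
  show ?case using IH s by simp
qed

lemma joint_distr:
  "distr P (borel \<Otimes>\<^sub>M PiM {..<b} (\<lambda>_. D)) (\<lambda>\<omega>. (sgd_iter \<theta>0 \<eta> b G \<xi> t \<omega>, \<lambda>i\<in>{..<b}. \<xi> t i \<omega>))
   = distr P borel (sgd_iter \<theta>0 \<eta> b G \<xi> t) \<Otimes>\<^sub>M distr P (PiM {..<b} (\<lambda>_. D)) (\<lambda>\<omega>. \<lambda>i\<in>{..<b}. \<xi> t i \<omega>)"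
proof -
  define K where "K = {..<t} \<times> {..<b}"
  define L where "L = {t} \<times> {..<b}"
  define X where "X = (\<lambda>(t, i). \<xi> t i)"
  define rK where "rK = (\<lambda>\<omega>. restrict (\<lambda>k. X k \<omega>) K)"
  define rL where "rL = (\<lambda>\<omega>. restrict (\<lambda>k. X k \<omega>) L)"
  define N where "N = PiM {..<b} (\<lambda>_. D)"
  have ind: "indep_var (PiM K (\<lambda>_. D)) rK (PiM L (\<lambda>_. D)) rL"
    unfolding X_def rK_def rL_def using indep by (intro indep_var_restrict) (auto simp: K_def L_def)
  have mK: "rK \<in> measurable P (PiM K (\<lambda>_. D))"
    unfolding rK_def by (rule measurable_restrict) (auto simp: K_def X_def intro!: xi_meas)
  have mL: "rL \<in> measurable P (PiM L (\<lambda>_. D))"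
    unfolding rL_def by (rule measurable_restrict) (auto simp: L_def X_def intro!: xi_meas)
  define Y1 where "Y1 = (\<lambda>x::nat \<times> nat \<Rightarrow> 'b. sgd_iter \<theta>0 \<eta> b G (\<lambda>s i x. x (s, i)) t x)"
  define Y2 where "Y2 = (\<lambda>x::nat \<times> nat \<Rightarrow> 'b. \<lambda>i\<in>{..<b}. x (t, i))"
  have m1: "Y1 \<in> borel_measurable (PiM K (\<lambda>_. D))"
    unfolding Y1_def
    by (rule sgd_meas) (auto simp: K_def intro!: measurable_component_singleton)
  have m2: "Y2 \<in> measurable (PiM L (\<lambda>_. D)) N"
    unfolding Y2_def N_def
    by (rule measurable_restrict) (auto simp: L_def intro!: measurable_component_singleton)
  have e1: "Y1 \<circ> rK = sgd_iter \<theta>0 \<eta> b G \<xi> t"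
  proof
    fix \<omega>
    show "(Y1 \<circ> rK) \<omega> = sgd_iter \<theta>0 \<eta> b G \<xi> t \<omega>"
      unfolding Y1_def rK_def o_def by (rule sgd_cong) (auto simp: K_def X_def)
  qed
  have e2: "Y2 \<circ> rL = (\<lambda>\<omega>. \<lambda>i\<in>{..<b}. \<xi> t i \<omega>)"
    by (auto simp: Y2_def rL_def L_def X_def fun_eq_iff)
  have J: "distr P (PiM K (\<lambda>_. D) \<Otimes>\<^sub>M PiM L (\<lambda>_. D)) (\<lambda>\<omega>. (rK \<omega>, rL \<omega>))
        = distr P (PiM K (\<lambda>_. D)) rK \<Otimes>\<^sub>M distr P (PiM L (\<lambda>_. D)) rL"
    using ind by (simp add: indep_var_distribution_eq)
  have mp: "(\<lambda>(x, y). (Y1 x, Y2 y)) \<in> measurable (PiM K (\<lambda>_. D) \<Otimes>\<^sub>M PiM L (\<lambda>_. D)) (borel \<Otimes>\<^sub>M N)"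
    using m1 m2 by measurable
  have mKL: "(\<lambda>\<omega>. (rK \<omega>, rL \<omega>)) \<in> measurable P (PiM K (\<lambda>_. D) \<Otimes>\<^sub>M PiM L (\<lambda>_. D))"
    using mK mL by (rule measurable_Pair)
  have comp: "(\<lambda>(x, y). (Y1 x, Y2 y)) \<circ> (\<lambda>\<omega>. (rK \<omega>, rL \<omega>))
      = (\<lambda>\<omega>. (sgd_iter \<theta>0 \<eta> b G \<xi> t \<omega>, \<lambda>i\<in>{..<b}. \<xi> t i \<omega>))"
    using e1 e2 by (auto simp: fun_eq_iff o_def)
  have sf: "sigma_finite_measure (distr (distr P (PiM L (\<lambda>_. D)) rL) N Y2)"
  proof -
    have "prob_space (distr (distr P (PiM L (\<lambda>_. D)) rL) N Y2)"
      using m2 mL by (intro prob_space.prob_space_distr prob_space_distr) auto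
    then show ?thesis by (simp add: prob_space_imp_sigma_finite)
  qed
  have "distr P (borel \<Otimes>\<^sub>M N) (\<lambda>\<omega>. (sgd_iter \<theta>0 \<eta> b G \<xi> t \<omega>, \<lambda>i\<in>{..<b}. \<xi> t i \<omega>))
      = distr (distr P (PiM K (\<lambda>_. D) \<Otimes>\<^sub>M PiM L (\<lambda>_. D)) (\<lambda>\<omega>. (rK \<omega>, rL \<omega>))) (borel \<Otimes>\<^sub>M N) (\<lambda>(x, y). (Y1 x, Y2 y))"
    unfolding distr_distr[OF mp mKL] comp ..
  also have "\<dots> = distr (distr P (PiM K (\<lambda>_. D)) rK \<Otimes>\<^sub>M distr P (PiM L (\<lambda>_. D)) rL) (borel \<Otimes>\<^sub>M N) (\<lambda>(x, y). (Y1 x, Y2 y))"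
    unfolding J ..
  also have "\<dots> = distr (distr P (PiM K (\<lambda>_. D)) rK) borel Y1 \<Otimes>\<^sub>M distr (distr P (PiM L (\<lambda>_. D)) rL) N Y2"
    by (rule pair_measure_distr[symmetric]) (use m1 m2 sf in simp_all)
  also have "\<dots> = distr P borel (sgd_iter \<theta>0 \<eta> b G \<xi> t) \<Otimes>\<^sub>M distr P N (\<lambda>\<omega>. \<lambda>i\<in>{..<b}. \<xi> t i \<omega>)"
    by (simp add: distr_distr[OF m1 mK] distr_distr[OF m2 mL] e1 e2)
  finally show ?thesis unfolding N_def .
qed

end



context sgd
begin

lemma step:
  assumes eta: "0 \<le> \<eta> t" and c: "0 \<le> \<eta> t * (1 - Lb * \<eta> t / 2)"
  shows "(\<integral>\<^sup>+\<omega>. ennreal (F (sgd_iter \<theta>0 \<eta> b G \<xi> (Suc t) \<omega>) - Fmin) \<partial>P)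
      + ennreal (\<eta> t * (1 - Lb * \<eta> t / 2)) * (\<integral>\<^sup>+\<omega>. ennreal ((norm (grad F (sgd_iter \<theta>0 \<eta> b G \<xi> t \<omega>)))\<^sup>2) \<partial>P)
    \<le> (\<integral>\<^sup>+\<omega>. ennreal (F (sgd_iter \<theta>0 \<eta> b G \<xi> t \<omega>) - Fmin) \<partial>P) + ennreal (Lb * (\<eta> t)\<^sup>2 * \<sigma>\<^sup>2 / (2 * real b))"
proof -
  define \<Theta> where "\<Theta> = sgd_iter \<theta>0 \<eta> b G \<xi> t"
  define Xi where "Xi = (\<lambda>\<omega>. \<lambda>i\<in>{..<b}. \<xi> t i \<omega>)"
  define N where "N = PiM {..<b} (\<lambda>_. D)"
  define \<mu> where "\<mu> = distr P borel \<Theta>"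
  define \<nu> where "\<nu> = distr P N Xi"
  define c where "c = \<eta> t * (1 - Lb * \<eta> t / 2)"
  define K where "K = Lb * (\<eta> t)\<^sup>2 * \<sigma>\<^sup>2 / (2 * real b)"
  define H where "H = (\<lambda>z::'a \<times> (nat \<Rightarrow> 'b).
      ennreal (F (fst z - \<eta> t *\<^sub>R ((1 / real b) *\<^sub>R (\<Sum>i<b. G (snd z i) (fst z)))) - Fmin))"
  have m\<Theta>: "\<Theta> \<in> borel_measurable P" unfolding \<Theta>_def by (rule sgd_meas) (auto intro: xi_meas)
  have mXi: "Xi \<in> measurable P N" unfolding Xi_def N_def
    by (rule measurable_restrict) (auto intro: xi_meas)
  have mS: "(\<lambda>z::'a \<times> (nat \<Rightarrow> 'b). \<Sum>i<b. G (snd z i) (fst z)) \<in> borel_measurable (borel \<Otimes>\<^sub>M N)"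
  proof (rule borel_measurable_sum)
    fix i assume "i \<in> {..<b}"
    then have "(\<lambda>z::'a \<times> (nat \<Rightarrow> 'b). snd z i) \<in> measurable (borel \<Otimes>\<^sub>M N) D"
      unfolding N_def by (intro measurable_compose[OF measurable_snd] measurable_component_singleton) auto
    then show "(\<lambda>z::'a \<times> (nat \<Rightarrow> 'b). G (snd z i) (fst z)) \<in> borel_measurable (borel \<Otimes>\<^sub>M N)"
      by (rule G_comp_meas) simp
  qed
  have mH: "H \<in> borel_measurable (borel \<Otimes>\<^sub>M N)"
    unfolding H_def using mS by measurable
  have sets_eq: "sets (\<mu> \<Otimes>\<^sub>M \<nu>) = sets (borel \<Otimes>\<^sub>M N)"
    unfolding \<mu>_def \<nu>_def by (intro sets_pair_measure_cong) simp_all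
  have mH': "H \<in> borel_measurable (\<mu> \<Otimes>\<^sub>M \<nu>)"
    unfolding measurable_cong_sets[OF sets_eq refl] by (rule mH)
  have P\<mu>: "prob_space \<mu>" unfolding \<mu>_def using m\<Theta> by (rule prob_space_distr)
  have P\<nu>: "prob_space \<nu>" unfolding \<nu>_def using mXi by (rule prob_space_distr)
  interpret \<nu>: prob_space \<nu> by (rule P\<nu>)
  interpret \<mu>: prob_space \<mu> by (rule P\<mu>)
  have Xi_app: "(\<Sum>i<b. G (Xi \<omega> i) x) = (\<Sum>i<b. G (\<xi> t i \<omega>) x)" for \<omega> x
    unfolding Xi_def by (intro sum.cong) auto
  have inner: "(\<integral>\<^sup>+x. H (\<theta>, x) \<partial>\<nu>)
      = (\<integral>\<^sup>+\<omega>. ennreal (F (\<theta> - \<eta> t *\<^sub>R ((1 / real b) *\<^sub>R (\<Sum>i<b. G (\<xi> t i \<omega>) \<theta>))) - Fmin) \<partial>P)" for \<theta>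
  proof -
    have "(\<lambda>x. H (\<theta>, x)) \<in> borel_measurable N" using measurable_Pair2[OF mH, of \<theta>] by simp
    then have "(\<integral>\<^sup>+x. H (\<theta>, x) \<partial>\<nu>) = (\<integral>\<^sup>+\<omega>. H (\<theta>, Xi \<omega>) \<partial>P)"
      unfolding \<nu>_def by (intro nn_integral_distr mXi) simp
    also have "\<dots> = (\<integral>\<^sup>+\<omega>. ennreal (F (\<theta> - \<eta> t *\<^sub>R ((1 / real b) *\<^sub>R (\<Sum>i<b. G (\<xi> t i \<omega>) \<theta>))) - Fmin) \<partial>P)"
      unfolding H_def by (simp add: Xi_app)
    finally show ?thesis .
  qed
  have pw: "(\<integral>\<^sup>+x. H (\<theta>, x) \<partial>\<nu>) + ennreal c * ennreal ((norm (grad F \<theta>))\<^sup>2)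
        \<le> ennreal (F \<theta> - Fmin) + ennreal K" for \<theta>
  proof -
    have "ennreal c * ennreal ((norm (grad F \<theta>))\<^sup>2) = ennreal (c * (norm (grad F \<theta>))\<^sup>2)"
      using c unfolding c_def by (simp add: ennreal_mult)
    moreover have "ennreal (F \<theta> - Fmin) + ennreal K = ennreal (F \<theta> - Fmin + K)"
      using Fmin Lb unfolding K_def by (intro ennreal_plus[symmetric]) auto
    ultimately show ?thesis unfolding inner c_def K_def using PW[OF eta c, of \<theta> t] by simp
  qed
  have mInn: "(\<lambda>\<theta>. \<integral>\<^sup>+x. H (\<theta>, x) \<partial>\<nu>) \<in> borel_measurable \<mu>"
    using \<nu>.borel_measurable_nn_integral_fst[OF mH'] by simp
  have mg: "(\<lambda>\<theta>. ennreal ((norm (grad F \<theta>))\<^sup>2)) \<in> borel_measurable borel" by measurable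
  have mf: "(\<lambda>\<theta>. ennreal (F \<theta> - Fmin)) \<in> borel_measurable borel" by measurable
  have "(\<integral>\<^sup>+\<omega>. ennreal (F (sgd_iter \<theta>0 \<eta> b G \<xi> (Suc t) \<omega>) - Fmin) \<partial>P) = (\<integral>\<^sup>+\<omega>. H (\<Theta> \<omega>, Xi \<omega>) \<partial>P)"
    unfolding H_def \<Theta>_def by (simp add: Xi_app)
  also have "\<dots> = (\<integral>\<^sup>+z. H z \<partial>(distr P (borel \<Otimes>\<^sub>M N) (\<lambda>\<omega>. (\<Theta> \<omega>, Xi \<omega>))))"
    by (rule nn_integral_distr[symmetric]) (use m\<Theta> mXi mH in \<open>auto intro: measurable_Pair\<close>)
  also have "distr P (borel \<Otimes>\<^sub>M N) (\<lambda>\<omega>. (\<Theta> \<omega>, Xi \<omega>)) = \<mu> \<Otimes>\<^sub>M \<nu>"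
    unfolding \<mu>_def \<nu>_def \<Theta>_def Xi_def N_def by (rule joint_distr)
  also have "(\<integral>\<^sup>+z. H z \<partial>(\<mu> \<Otimes>\<^sub>M \<nu>)) = (\<integral>\<^sup>+\<theta>. (\<integral>\<^sup>+x. H (\<theta>, x) \<partial>\<nu>) \<partial>\<mu>)"
    by (rule \<nu>.nn_integral_fst[symmetric, OF mH'])
  finally have E1: "(\<integral>\<^sup>+\<omega>. ennreal (F (sgd_iter \<theta>0 \<eta> b G \<xi> (Suc t) \<omega>) - Fmin) \<partial>P)
      = (\<integral>\<^sup>+\<theta>. (\<integral>\<^sup>+x. H (\<theta>, x) \<partial>\<nu>) \<partial>\<mu>)" .
  have E2: "(\<integral>\<^sup>+\<omega>. ennreal ((norm (grad F (sgd_iter \<theta>0 \<eta> b G \<xi> t \<omega>)))\<^sup>2) \<partial>P)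
      = (\<integral>\<^sup>+\<theta>. ennreal ((norm (grad F \<theta>))\<^sup>2) \<partial>\<mu>)"
    unfolding \<mu>_def \<Theta>_def using mg by (intro nn_integral_distr[symmetric]) (use m\<Theta>[unfolded \<Theta>_def] in simp_all)
  have E3: "(\<integral>\<^sup>+\<omega>. ennreal (F (sgd_iter \<theta>0 \<eta> b G \<xi> t \<omega>) - Fmin) \<partial>P)
      = (\<integral>\<^sup>+\<theta>. ennreal (F \<theta> - Fmin) \<partial>\<mu>)"
    unfolding \<mu>_def \<Theta>_def using mf by (intro nn_integral_distr[symmetric]) (use m\<Theta>[unfolded \<Theta>_def] in simp_all)
  have "(\<integral>\<^sup>+\<theta>. (\<integral>\<^sup>+x. H (\<theta>, x) \<partial>\<nu>) \<partial>\<mu>) + ennreal c * (\<integral>\<^sup>+\<theta>. ennreal ((norm (grad F \<theta>))\<^sup>2) \<partial>\<mu>)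
      = (\<integral>\<^sup>+\<theta>. (\<integral>\<^sup>+x. H (\<theta>, x) \<partial>\<nu>) + ennreal c * ennreal ((norm (grad F \<theta>))\<^sup>2) \<partial>\<mu>)"
  proof -
    have "(\<integral>\<^sup>+\<theta>. ennreal c * ennreal ((norm (grad F \<theta>))\<^sup>2) \<partial>\<mu>) = ennreal c * (\<integral>\<^sup>+\<theta>. ennreal ((norm (grad F \<theta>))\<^sup>2) \<partial>\<mu>)"
      using mg unfolding \<mu>_def by (intro nn_integral_cmult) simp
    moreover have "(\<integral>\<^sup>+\<theta>. (\<integral>\<^sup>+x. H (\<theta>, x) \<partial>\<nu>) + ennreal c * ennreal ((norm (grad F \<theta>))\<^sup>2) \<partial>\<mu>)
        = (\<integral>\<^sup>+\<theta>. (\<integral>\<^sup>+x. H (\<theta>, x) \<partial>\<nu>) \<partial>\<mu>) + (\<integral>\<^sup>+\<theta>. ennreal c * ennreal ((norm (grad F \<theta>))\<^sup>2) \<partial>\<mu>)"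
      using mInn mg unfolding \<mu>_def by (intro nn_integral_add) simp_all
    ultimately show ?thesis by simp
  qed
  also have "\<dots> \<le> (\<integral>\<^sup>+\<theta>. ennreal (F \<theta> - Fmin) + ennreal K \<partial>\<mu>)"
    by (intro nn_integral_mono pw)
  also have "\<dots> = (\<integral>\<^sup>+\<theta>. ennreal (F \<theta> - Fmin) \<partial>\<mu>) + ennreal K"
  proof -
    have "(\<integral>\<^sup>+\<theta>. ennreal (F \<theta> - Fmin) + ennreal K \<partial>\<mu>) = (\<integral>\<^sup>+\<theta>. ennreal (F \<theta> - Fmin) \<partial>\<mu>) + (\<integral>\<^sup>+\<theta>. ennreal K \<partial>\<mu>)"
      using mf unfolding \<mu>_def by (intro nn_integral_add) simp_all
    moreover have "(\<integral>\<^sup>+\<theta>. ennreal K \<partial>\<mu>) = ennreal K" by (simp add: \<mu>.emeasure_space_1)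
    ultimately show ?thesis by simp
  qed
  finally show ?thesis unfolding E1 E2 E3 c_def K_def .
qed

end



lemma ennreal_div_bound:
  fixes m :: ennreal
  assumes r: "0 < r" and X: "0 \<le> X" and le: "ennreal r * m \<le> ennreal X"
  shows "m \<le> ennreal (X / r)"
proof (cases m rule: ennreal_cases)
  case (real q)
  then have "ennreal (r * q) \<le> ennreal X" using le r by (simp add: ennreal_mult)
  then have "r * q \<le> X" using X by (simp add: ennreal_le_iff)
  then have "q \<le> X / r" using r by (simp add: field_simps mult.commute)
  then show ?thesis using real by (simp add: ennreal_leI)
next
  case top
  then have "ennreal r * m = \<infinity>" using r by (simp add: ennreal_mult_top)
  then have "ennreal X = \<top>" using le by (simp add: top_unique)
  then show ?thesis by simp
qed

lemma alg3:
  fixes u S bb \<phi> L \<sigma>2 Q :: real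
  shows "u > 0 \<Longrightarrow> S > 0 \<Longrightarrow> bb > 0 \<Longrightarrow>
    (\<phi> + L * \<sigma>2 / (2 * bb) * Q) / (u / 2 * S) = 2 * \<phi> / u * (1 / S) + L * \<sigma>2 / u * (Q / (bb * S))"
  by (simp add: field_simps)

context sgd
begin

lemma sum_bound:
  assumes "\<forall>t. 0 \<le> \<eta> t \<and> 0 \<le> \<eta> t * (1 - Lb * \<eta> t / 2)"
  shows "(\<integral>\<^sup>+\<omega>. ennreal (F (sgd_iter \<theta>0 \<eta> b G \<xi> T \<omega>) - Fmin) \<partial>P)
      + (\<Sum>t<T. ennreal (\<eta> t * (1 - Lb * \<eta> t / 2)) * (\<integral>\<^sup>+\<omega>. ennreal ((norm (grad F (sgd_iter \<theta>0 \<eta> b G \<xi> t \<omega>)))\<^sup>2) \<partial>P))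
    \<le> ennreal (F \<theta>0 - Fmin) + (\<Sum>t<T. ennreal (Lb * (\<eta> t)\<^sup>2 * \<sigma>\<^sup>2 / (2 * real b)))"
proof (induction T)
  case 0
  show ?case by (simp add: emeasure_space_1)
next
  case (Suc T)
  define E where "E = (\<lambda>T. \<integral>\<^sup>+\<omega>. ennreal (F (sgd_iter \<theta>0 \<eta> b G \<xi> T \<omega>) - Fmin) \<partial>P)"
  define CE where "CE = (\<lambda>t. ennreal (\<eta> t * (1 - Lb * \<eta> t / 2)) * (\<integral>\<^sup>+\<omega>. ennreal ((norm (grad F (sgd_iter \<theta>0 \<eta> b G \<xi> t \<omega>)))\<^sup>2) \<partial>P))"
  define KK where "KK = (\<lambda>t. ennreal (Lb * (\<eta> t)\<^sup>2 * \<sigma>\<^sup>2 / (2 * real b)))"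
  have st: "E (Suc T) + CE T \<le> E T + KK T"
    unfolding E_def CE_def KK_def using assms by (intro step) auto
  have IH: "E T + (\<Sum>t<T. CE t) \<le> ennreal (F \<theta>0 - Fmin) + (\<Sum>t<T. KK t)"
    using Suc.IH unfolding E_def CE_def KK_def .
  have "E (Suc T) + (\<Sum>t<Suc T. CE t) = (E (Suc T) + CE T) + (\<Sum>t<T. CE t)"
    by (simp add: ac_simps)
  also have "\<dots> \<le> (E T + KK T) + (\<Sum>t<T. CE t)" using st by (rule add_right_mono)
  also have "\<dots> = (E T + (\<Sum>t<T. CE t)) + KK T" by (simp add: ac_simps)
  also have "\<dots> \<le> (ennreal (F \<theta>0 - Fmin) + (\<Sum>t<T. KK t)) + KK T" using IH by (rule add_right_mono)
  also have "\<dots> = ennreal (F \<theta>0 - Fmin) + (\<Sum>t<Suc T. KK t)" by (simp add: ac_simps)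
  finally show ?case unfolding E_def CE_def KK_def .
qed

lemma main_bound:
  assumes eta: "\<forall>t. 0 \<le> \<eta> t \<and> \<eta> t \<le> \<eta>max" and lm: "Lb * \<eta>max < 2"
    and S0: "(\<Sum>t<T. \<eta> t) \<noteq> 0"
  shows "(MIN t\<in>{..<T}. \<integral>\<^sup>+\<omega>. ennreal ((norm (grad F (sgd_iter \<theta>0 \<eta> b G \<xi> t \<omega>)))\<^sup>2) \<partial>P)
     \<le> ennreal (2 * (F \<theta>0 - Fmin) / (2 - Lb * \<eta>max) * B_T \<eta> T
                + Lb * \<sigma>\<^sup>2 / (2 - Lb * \<eta>max) * V_T \<eta> b T)"
proof -
  define e where "e = (\<lambda>t. \<integral>\<^sup>+\<omega>. ennreal ((norm (grad F (sgd_iter \<theta>0 \<eta> b G \<xi> t \<omega>)))\<^sup>2) \<partial>P)"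
  define m where "m = (MIN t\<in>{..<T}. e t)"
  define S where "S = (\<Sum>t<T. \<eta> t)"
  define u where "u = 2 - Lb * \<eta>max"
  define c where "c = (\<lambda>t. \<eta> t * (1 - Lb * \<eta> t / 2))"
  have T: "T \<noteq> 0" using S0 by (intro notI) simp
  have Sp: "S > 0"
  proof -
    have "S \<ge> 0" unfolding S_def using eta by (intro sum_nonneg) auto
    then show ?thesis using S0 unfolding S_def by simp
  qed
  have up: "u > 0" using lm by (simp add: u_def)
  have bp: "real b > 0" using b by simp
  have Bnn: "0 \<le> Lb * \<sigma>\<^sup>2 / (2 * real b) * (\<Sum>t<T. (\<eta> t)\<^sup>2)"
    using Lb bp by (intro mult_nonneg_nonneg divide_nonneg_pos sum_nonneg) auto
  have ct: "u / 2 * \<eta> t \<le> c t" "0 \<le> c t" for t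
  proof -
    have "Lb * \<eta> t \<le> Lb * \<eta>max" using eta Lb by (intro mult_left_mono) auto
    then have "u / 2 \<le> 1 - Lb * \<eta> t / 2" unfolding u_def by simp
    then have "u / 2 * \<eta> t \<le> (1 - Lb * \<eta> t / 2) * \<eta> t" by (rule mult_right_mono) (use eta in auto)
    then show a1: "u / 2 * \<eta> t \<le> c t" unfolding c_def by (simp add: mult.commute)
    have "0 \<le> u / 2 * \<eta> t" using up eta by simp
    then show "0 \<le> c t" using a1 by linarith
  qed
  have mle: "m \<le> e t" if "t < T" for t
    unfolding m_def using that by (intro Min_le) auto
  have "ennreal (u / 2 * S) * m = (\<Sum>t<T. ennreal (u / 2 * \<eta> t) * m)"
  proof -
    have "ennreal (u / 2 * S) = (\<Sum>t<T. ennreal (u / 2 * \<eta> t))"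
      unfolding S_def sum_distrib_left using up eta by (intro sum_ennreal[symmetric]) auto
    then show ?thesis by (simp add: sum_distrib_right)
  qed
  also have "\<dots> \<le> (\<Sum>t<T. ennreal (c t) * e t)"
    using ct mle by (intro sum_mono mult_mono) (auto intro: ennreal_leI)
  also have "\<dots> \<le> (\<integral>\<^sup>+\<omega>. ennreal (F (sgd_iter \<theta>0 \<eta> b G \<xi> T \<omega>) - Fmin) \<partial>P) + (\<Sum>t<T. ennreal (c t) * e t)"
    by simp
  also have "\<dots> \<le> ennreal (F \<theta>0 - Fmin) + (\<Sum>t<T. ennreal (Lb * (\<eta> t)\<^sup>2 * \<sigma>\<^sup>2 / (2 * real b)))"
    unfolding c_def e_def using ct by (intro sum_bound) (auto simp: c_def eta)
  also have "\<dots> = ennreal (F \<theta>0 - Fmin + Lb * \<sigma>\<^sup>2 / (2 * real b) * (\<Sum>t<T. (\<eta> t)\<^sup>2))"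
  proof -
    have "(\<Sum>t<T. ennreal (Lb * (\<eta> t)\<^sup>2 * \<sigma>\<^sup>2 / (2 * real b))) = ennreal (\<Sum>t<T. Lb * (\<eta> t)\<^sup>2 * \<sigma>\<^sup>2 / (2 * real b))"
      using Lb bp by (intro sum_ennreal) auto
    also have "(\<Sum>t<T. Lb * (\<eta> t)\<^sup>2 * \<sigma>\<^sup>2 / (2 * real b)) = Lb * \<sigma>\<^sup>2 / (2 * real b) * (\<Sum>t<T. (\<eta> t)\<^sup>2)"
      by (simp add: sum_distrib_left sum_divide_distrib mult_ac)
    finally have A: "(\<Sum>t<T. ennreal (Lb * (\<eta> t)\<^sup>2 * \<sigma>\<^sup>2 / (2 * real b))) = ennreal (Lb * \<sigma>\<^sup>2 / (2 * real b) * (\<Sum>t<T. (\<eta> t)\<^sup>2))" .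
    show ?thesis unfolding A by (rule ennreal_plus[symmetric]) (use Fmin Bnn in auto)
  qed
  finally have le: "ennreal (u / 2 * S) * m \<le> ennreal (F \<theta>0 - Fmin + Lb * \<sigma>\<^sup>2 / (2 * real b) * (\<Sum>t<T. (\<eta> t)\<^sup>2))" .
  have X0: "0 \<le> F \<theta>0 - Fmin + Lb * \<sigma>\<^sup>2 / (2 * real b) * (\<Sum>t<T. (\<eta> t)\<^sup>2)"
  proof -
    have "0 \<le> F \<theta>0 - Fmin" using Fmin by simp
    then show ?thesis using Bnn by linarith
  qed
  have "m \<le> ennreal ((F \<theta>0 - Fmin + Lb * \<sigma>\<^sup>2 / (2 * real b) * (\<Sum>t<T. (\<eta> t)\<^sup>2)) / (u / 2 * S))"
    by (rule ennreal_div_bound[OF _ X0 le]) (use up Sp in simp)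
  also have "(F \<theta>0 - Fmin + Lb * \<sigma>\<^sup>2 / (2 * real b) * (\<Sum>t<T. (\<eta> t)\<^sup>2)) / (u / 2 * S)
      = 2 * (F \<theta>0 - Fmin) / u * (1 / S) + Lb * \<sigma>\<^sup>2 / u * ((\<Sum>t<T. (\<eta> t)\<^sup>2) / (real b * S))"
    by (rule alg3[OF up Sp bp])
  finally show ?thesis unfolding m_def e_def B_T_def V_T_def S_def u_def .
qed

end




lemma part_const:
  assumes "0 \<le> hmax" "(\<Sum>t<T. const_lr hmax t) \<noteq> 0"
  shows "B_T (const_lr hmax) T \<le> 1 / (hmax * real T) \<and> V_T (const_lr hmax) b T \<le> hmax / real b"
proof -
  have s: "(\<Sum>t<T. const_lr hmax t) = real T * hmax" by (simp add: const_lr_def)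
  with assms have "hmax > 0" "T > 0" by auto
  then show ?thesis using s by (auto simp: B_T_def V_T_def const_lr_def power2_eq_square mult.commute)
qed

lemma sqrt_tele: "(\<Sum>t<T. 1 / sqrt (real t + 1)) \<ge> 2 * (sqrt (real T + 1) - 1)"
proof (induction T)
  case 0 then show ?case by simp
next
  case (Suc T)
  have key: "2 * (sqrt (real T + 2) - sqrt (real T + 1)) \<le> 1 / sqrt (real T + 1)"
  proof -
    let ?a = "sqrt (real T + 2)" and ?c = "sqrt (real T + 1)"
    have c: "?c > 0" by simp
    have ac: "?c \<le> ?a" by simp
    have "(?a - ?c) * (?a + ?c) = 1" by (simp add: algebra_simps)
    moreover have "?a + ?c > 0" using c ac by linarith
    ultimately have "?a - ?c = 1 / (?a + ?c)" by (simp add: eq_divide_eq)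
    also have "\<dots> \<le> 1 / (2 * ?c)" using c ac by (intro divide_left_mono) (auto intro!: mult_pos_pos add_pos_pos)
    finally show ?thesis using c by (simp add: field_simps)
  qed
  have "real (Suc T) + 1 = real T + 2" by simp
  then show ?case using Suc key by (simp add: add.commute)
qed

lemma part_dimin:
  assumes "0 \<le> hmax" "(\<Sum>t<T. dimin_lr hmax t) \<noteq> 0"
  shows "B_T (dimin_lr hmax) T \<le> 1 / (2 * hmax * (sqrt (real T + 1) - 1))
     \<and> V_T (dimin_lr hmax) b T \<le> hmax * (1 + ln (real T)) / (2 * real b * (sqrt (real T + 1) - 1))"
proof -
  have s: "(\<Sum>t<T. dimin_lr hmax t) = hmax * (\<Sum>t<T. 1 / sqrt (real t + 1))"
    by (simp add: dimin_lr_def sum_distrib_left)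
  with assms have hp: "hmax > 0" and "T \<noteq> 0" by (auto intro: ccontr)
  then have T1: "T \<ge> 1" by simp
  have "sqrt (real T + 1) > 1" using T1 by simp
  then have q: "2 * (sqrt (real T + 1) - 1) > 0" by simp
  have S: "(\<Sum>t<T. 1 / sqrt (real t + 1)) \<ge> 2 * (sqrt (real T + 1) - 1)" by (rule sqrt_tele)
  have B: "B_T (dimin_lr hmax) T \<le> 1 / (2 * hmax * (sqrt (real T + 1) - 1))"
  proof -
    have S': "0 < (\<Sum>t<T. 1 / sqrt (real t + 1))" using q S by linarith
    show ?thesis unfolding B_T_def s using hp q S S'
      by (subst mult.assoc, intro divide_left_mono mult_left_mono mult_pos_pos) auto
  qed
  have h: "(\<Sum>t<T. (dimin_lr hmax t)\<^sup>2) = hmax\<^sup>2 * harm T"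
    by (simp add: dimin_lr_def harm_altdef sum_distrib_left power_divide field_simps)
  have "harm T - ln (real T) \<le> harm 1 - ln (real 1)"
    using euler_mascheroni_sequence_decreasing[of 1 T] T1 by simp
  then have H: "harm T \<le> 1 + ln (real T)" by (simp add: harm_def)
  show ?thesis
  proof (cases "b = 0")
    case True then show ?thesis using B by (simp add: V_T_def)
  next
    case False
    then have bp: "real b > 0" by simp
    have "V_T (dimin_lr hmax) b T = hmax\<^sup>2 * harm T / (real b * (hmax * (\<Sum>t<T. 1 / sqrt (real t + 1))))"
      unfolding V_T_def h s ..
    also have "\<dots> \<le> hmax\<^sup>2 * (1 + ln (real T)) / (real b * (hmax * (2 * (sqrt (real T + 1) - 1))))"
      using H hp bp q S harm_nonneg[where n=T, THEN order_trans[of 0]]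
      by (intro frac_le mult_left_mono mult_pos_pos) (auto)
    also have "\<dots> = hmax * (1 + ln (real T)) / (2 * real b * (sqrt (real T + 1) - 1))"
      using hp bp q by (simp add: power2_eq_square field_simps)
    finally show ?thesis using B by simp
  qed
qed


lemma sin_tele_step:
  fixes x y :: real
  shows "sin (x + y) - sin (x - y) = 2 * sin y * cos x"
  unfolding sin_add sin_diff by (simp add: algebra_simps)

lemma cos_sum_tele:
  fixes th :: real
  shows "2 * sin (th/2) * (\<Sum>e<E. cos (real e * th)) = sin ((real E - 1/2) * th) + sin (th/2)"
proof (induction E)
  case 0
  have "(real 0 - 1/2) * th = - (th/2)" by simp
  then have "sin ((real 0 - 1/2) * th) = - sin (th/2)" by (simp only: sin_minus)
  then show ?case by simp
next
  case (Suc E)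
  have a: "(real (Suc E) - 1/2) * th = real E * th + th/2" "(real E - 1/2) * th = real E * th - th/2"
    by (simp_all add: algebra_simps)
  have st: "sin ((real (Suc E) - 1/2) * th) - sin ((real E - 1/2) * th) = 2 * sin (th/2) * cos (real E * th)"
    unfolding a by (rule sin_tele_step)
  have "2 * sin (th/2) * (\<Sum>e<Suc E. cos (real e * th))
     = 2 * sin (th/2) * (\<Sum>e<E. cos (real e * th)) + 2 * sin (th/2) * cos (real E * th)"
    by (simp only: sum.lessThan_Suc distrib_left)
  then show ?case using Suc.IH st by linarith
qed

lemma cos_sum1:
  assumes "E \<ge> 1"
  shows "(\<Sum>e<E. cos (real e * pi / real E)) = 1"
proof -
  let ?th = "pi / real E"
  have pos: "sin (?th/2) > 0"
    using assms by (intro sin_gt_zero) (auto simp: field_simps)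
  have arg: "(real E - 1/2) * ?th = pi - ?th/2"
    using assms by (simp add: field_simps)
  have "sin ((real E - 1/2) * ?th) = sin (pi - ?th/2)"
    by (simp only: arg)
  also have "\<dots> = sin (?th/2)" by simp
  finally have "2 * sin (?th/2) * (\<Sum>e<E. cos (real e * ?th)) = 2 * sin (?th/2)"
    using cos_sum_tele[of ?th E] by simp
  then show ?thesis using pos by (simp add: times_divide_eq_right)
qed

lemma cos_sum2:
  assumes "E \<ge> 2"
  shows "(\<Sum>e<E. cos (real e * (2 * pi / real E))) = 0"
proof -
  let ?th = "2 * pi / real E"
  have pos: "sin (?th/2) > 0"
    using assms pi_gt3 by (intro sin_gt_zero) (auto simp: field_simps)
  have arg: "(real E - 1/2) * ?th = - (?th/2) + 2 * pi"
    using assms by (simp add: field_simps)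
  have "sin ((real E - 1/2) * ?th) = sin (- (?th/2) + 2 * pi)"
    by (simp only: arg)
  also have "\<dots> = - sin (?th/2)" by (simp add: sin_add)
  finally have "2 * sin (?th/2) * (\<Sum>e<E. cos (real e * ?th)) = 0"
    using cos_sum_tele[of ?th E] by simp
  then show ?thesis using pos by simp
qed

lemma cos_sq_sum:
  assumes "E \<ge> 1"
  shows "(\<Sum>e<E. (cos (real e * pi / real E))\<^sup>2) \<le> (real E + 1) / 2"
proof (cases "E = 1")
  case True then show ?thesis by simp
next
  case False
  then have E2: "E \<ge> 2" using assms by simp
  have "(\<Sum>e<E. (cos (real e * pi / real E))\<^sup>2) = (\<Sum>e<E. 1/2 + cos (real e * (2 * pi / real E)) / 2)"
  proof (rule sum.cong)
    fix e assume "e \<in> {..<E}"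
    have "cos (real e * (2 * pi / real E)) = cos (2 * (real e * pi / real E))"
      by (rule arg_cong[where f=cos]) simp
    also have "\<dots> = 2 * (cos (real e * pi / real E))\<^sup>2 - 1"
      by (rule cos_double_cos)
    finally have "cos (real e * (2 * pi / real E)) = 2 * (cos (real e * pi / real E))\<^sup>2 - 1" .
    then show "(cos (real e * pi / real E))\<^sup>2 = 1/2 + cos (real e * (2 * pi / real E)) / 2"
      by linarith
  qed simp
  also have "\<dots> = real E / 2"
    using cos_sum2[OF E2] by (simp add: sum.distrib sum_divide_distrib[symmetric])
  finally show ?thesis by simp
qed

lemma sum_div_block:
  fixes g :: "nat \<Rightarrow> real"
  shows "(\<Sum>t<K * E. g (t div K)) = real K * (\<Sum>e<E. g e)"
proof (induction E)
  case 0 then show ?case by simp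
next
  case (Suc E)
  have "(\<Sum>t<K * Suc E. g (t div K)) = (\<Sum>t\<in>{0..<K*E}. g (t div K)) + (\<Sum>t\<in>{K*E..<K*E+K}. g (t div K))"
    by (simp add: lessThan_atLeast0 sum.atLeastLessThan_concat[symmetric] algebra_simps)
  also have "(\<Sum>t\<in>{K*E..<K*E+K}. g (t div K)) = (\<Sum>t\<in>{K*E..<K*E+K}. g E)"
  proof (rule sum.cong)
    fix t assume t: "t \<in> {K*E..<K*E+K}"
    then have "K > 0" by auto
    then have "t div K = E" using t by (auto intro!: div_nat_eqI simp: algebra_simps)
    then show "g (t div K) = g E" by simp
  qed simp
  finally show ?case using Suc by (simp add: lessThan_atLeast0 algebra_simps)
qed

lemma cancel_aux: "(k::real) \<noteq> 0 \<Longrightarrow> k * n / (bb * (k * d)) = n / d / bb"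
  by (cases "d = 0"; cases "bb = 0") (simp_all add: field_simps)

lemma part_cos:
  fixes hmin hmax :: real
  assumes K: "K \<ge> 1" and h: "0 \<le> hmin" "hmin \<le> hmax"
    and s0: "(\<Sum>t<K * E. cosine_lr hmin hmax K E t) \<noteq> 0"
  shows "B_T (cosine_lr hmin hmax K E) (K * E) \<le> 2 / ((hmin + hmax) * real (K * E))
        \<and> V_T (cosine_lr hmin hmax K E) b (K * E)
            \<le> (3 * hmin\<^sup>2 + 2 * hmin * hmax + 3 * hmax\<^sup>2) / (4 * (hmin + hmax) * real b)
              + (hmax - hmin) * real K / (real b * real (K * E))"
proof -
  define a where "a = (hmin + hmax) / 2"
  define c where "c = (hmax - hmin) / 2"
  have ca: "0 \<le> c" "c \<le> a" using h by (auto simp: a_def c_def)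
  have E: "E \<ge> 1" using s0 by (cases E) auto
  define g where "g = (\<lambda>e::nat. a + c * cos (real e * pi / real E))"
  have lr: "cosine_lr hmin hmax K E t = g (t div K)" for t
    by (simp add: cosine_lr_def g_def a_def c_def field_simps)
  have S1: "(\<Sum>t<K * E. cosine_lr hmin hmax K E t) = real K * (real E * a + c)"
    unfolding lr sum_div_block using cos_sum1[OF E]
    by (simp add: g_def sum.distrib sum_distrib_left[symmetric])
  have "(\<Sum>t<K * E. (cosine_lr hmin hmax K E t)\<^sup>2) = real K * (\<Sum>e<E. (g e)\<^sup>2)"
    unfolding lr by (rule sum_div_block)
  also have "(\<Sum>e<E. (g e)\<^sup>2) = real E * a\<^sup>2 + 2 * a * c * (\<Sum>e<E. cos (real e * pi / real E))
        + c\<^sup>2 * (\<Sum>e<E. (cos (real e * pi / real E))\<^sup>2)"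
    by (simp add: g_def power2_eq_square algebra_simps sum.distrib sum_distrib_left)
  finally have S2eq: "(\<Sum>t<K * E. (cosine_lr hmin hmax K E t)\<^sup>2) = real K * (real E * a\<^sup>2 + 2 * a * c * (\<Sum>e<E. cos (real e * pi / real E))
        + c\<^sup>2 * (\<Sum>e<E. (cos (real e * pi / real E))\<^sup>2))" .
  have cs2: "c\<^sup>2 * (\<Sum>e<E. (cos (real e * pi / real E))\<^sup>2) \<le> c\<^sup>2 * ((real E + 1) / 2)"
    using cos_sq_sum[OF E] by (rule mult_left_mono) simp
  have S2: "(\<Sum>t<K * E. (cosine_lr hmin hmax K E t)\<^sup>2) \<le> real K * (real E * a\<^sup>2 + 2 * a * c + c\<^sup>2 * ((real E + 1) / 2))"
    unfolding S2eq cos_sum1[OF E] using cs2 by (intro mult_left_mono) auto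
  have apos: "a > 0"
  proof (rule ccontr)
    assume "\<not> a > 0" then have "a = 0" "c = 0" using ca by auto
    then show False using s0 S1 by simp
  qed
  have Kp: "real K > 0" and Ep: "real E > 0" using K E by auto
  have B: "B_T (cosine_lr hmin hmax K E) (K * E) \<le> 2 / ((hmin + hmax) * real (K * E))"
  proof -
    have "2 / ((hmin + hmax) * real (K * E)) = 1 / (real K * (real E * a))"
      by (simp add: a_def field_simps)
    moreover have "1 / (real K * (real E * a + c)) \<le> 1 / (real K * (real E * a))"
      using apos Kp Ep ca by (intro divide_left_mono mult_left_mono mult_pos_pos add_pos_nonneg) auto
    ultimately show ?thesis unfolding B_T_def S1 by simp
  qed
  show ?thesis
  proof (cases "b = 0")
    case True then show ?thesis using B by (simp add: V_T_def)
  next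
    case False
    then have bp: "real b > 0" by simp
    have RHS: "(3 * hmin\<^sup>2 + 2 * hmin * hmax + 3 * hmax\<^sup>2) / (4 * (hmin + hmax) * real b)
              + (hmax - hmin) * real K / (real b * real (K * E))
           = ((2 * a\<^sup>2 + c\<^sup>2) / (2 * a) + 2 * c / real E) / real b"
    proof -
      have n1: "3 * hmin\<^sup>2 + 2 * hmin * hmax + 3 * hmax\<^sup>2 = 4 * (2 * a\<^sup>2 + c\<^sup>2)"
        by (simp add: a_def c_def power2_eq_square field_simps)
      have n2: "hmin + hmax = 2 * a" "hmax - hmin = 2 * c" by (simp_all add: a_def c_def)
      have r1: "4 * (2 * a\<^sup>2 + c\<^sup>2) / (4 * (2 * a) * real b) = (2 * a\<^sup>2 + c\<^sup>2) / (2 * a) / real b"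
        by (simp only: mult.assoc[of 4] mult_divide_mult_cancel_left_if divide_divide_eq_left) simp
      have r2: "2 * c * real K / (real b * real (K * E)) = 2 * c / real E / real b"
        using Kp by simp
      show ?thesis unfolding n1 n2 r1 r2 by (simp add: add_divide_distrib)
    qed
    have key: "(real E * a\<^sup>2 + 2 * a * c + c\<^sup>2 * ((real E + 1) / 2)) / (real E * a + c)
             \<le> (2 * a\<^sup>2 + c\<^sup>2) / (2 * a) + 2 * c / real E"
    proof -
      have d: "real E * a + c > 0" using apos Ep ca by (simp add: add_pos_nonneg)
      have "(real E * a\<^sup>2 + 2 * a * c + c\<^sup>2 * ((real E + 1) / 2)) * (2 * a * real E)
            \<le> ((2 * a\<^sup>2 + c\<^sup>2) * real E + 4 * a * c) * (real E * a + c)"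
      proof -
        have "a * c * real E \<le> 2 * a * a * real E"
          using ca apos Ep by (intro mult_right_mono) (auto simp: mult_left_mono)
        moreover have "0 \<le> c * c * real E" "0 \<le> 4 * a * c" using ca apos by auto
        ultimately have "0 \<le> 2 * a\<^sup>2 * real E + c\<^sup>2 * real E + 4 * a * c - a * c * real E"
          by (simp only: power2_eq_square)
        then have "0 \<le> c * (2 * a\<^sup>2 * real E + c\<^sup>2 * real E + 4 * a * c - a * c * real E)"
          using ca by simp
        then show ?thesis by (simp add: power2_eq_square algebra_simps)
      qed
      then show ?thesis using d apos Ep
        by (simp add: divide_simps) (simp add: algebra_simps)
    qed
    have "V_T (cosine_lr hmin hmax K E) b (K * E)
        \<le> real K * (real E * a\<^sup>2 + 2 * a * c + c\<^sup>2 * ((real E + 1) / 2)) / (real b * (real K * (real E * a + c)))"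
      unfolding V_T_def S1 using S2 bp Kp apos Ep ca
      by (intro divide_right_mono) (auto intro!: mult_nonneg_nonneg add_nonneg_nonneg)
    also have "\<dots> = ((real E * a\<^sup>2 + 2 * a * c + c\<^sup>2 * ((real E + 1) / 2)) / (real E * a + c)) / real b"
      by (rule cancel_aux) (use Kp in simp)
    also have "\<dots> \<le> ((2 * a\<^sup>2 + c\<^sup>2) / (2 * a) + 2 * c / real E) / real b"
      using key bp by (intro divide_right_mono) auto
    finally show ?thesis using B RHS by simp
  qed
qed



lemma mvt_pow:
  fixes y q :: real
  assumes y: "y \<ge> 0" and q: "q > 0"
  shows "(q+1) * y powr q \<le> (y+1) powr (q+1) - y powr (q+1)
       \<and> (y+1) powr (q+1) - y powr (q+1) \<le> (q+1) * (y+1) powr q"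
proof (cases "y = 0")
  case True then show ?thesis using q by simp
next
  case False
  then have yp: "y > 0" using y by simp
  have "\<exists>z. y < z \<and> z < y + 1 \<and> (y+1) powr (q+1) - y powr (q+1) = ((y+1) - y) * ((q+1) * z powr q)"
  proof (rule MVT2[of y "y+1" "\<lambda>x. x powr (q+1)" "\<lambda>x. (q+1) * x powr q"])
    show "y < y + 1" by simp
  next
    fix x assume "y \<le> x" "x \<le> y + 1"
    then have xp: "x > 0" using yp by simp
    have "((\<lambda>x. x powr (q+1)) has_real_derivative (q+1) * x powr (q + 1 - 1)) (at x)"
      by (rule has_real_derivative_powr[OF xp])
    then show "((\<lambda>x. x powr (q+1)) has_real_derivative (q+1) * x powr q) (at x)" by simp
  qed
  then obtain z where z: "z > y" "z < y + 1" "(y+1) powr (q+1) - y powr (q+1) = (q+1) * z powr q" by auto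
  have "y powr q \<le> z powr q" using z yp q by (intro powr_mono2) auto
  moreover have "z powr q \<le> (y+1) powr q" using z yp q by (intro powr_mono2) auto
  ultimately show ?thesis using z(3) q by simp
qed

lemma powsum_bounds:
  fixes q :: real
  assumes q: "q > 0" and T: "T \<ge> 1"
  shows "real T / (q+1) \<le> (\<Sum>t<T. (1 - real t / real T) powr q)
       \<and> (\<Sum>t<T. (1 - real t / real T) powr q) \<le> real T / (q+1) + 1"
proof -
  define x where "x = (\<lambda>t::nat. real T - real t)"
  define F where "F = (\<lambda>t. x t powr (q+1))"
  have Tp: "real T > 0" using T by simp
  have eq: "(1 - real t / real T) powr q = x t powr q / real T powr q" if "t < T" for t
  proof -
    have "1 - real t / real T = x t / real T" using Tp by (simp add: x_def field_simps)
    moreover have "x t \<ge> 0" using that by (simp add: x_def)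
    ultimately show ?thesis using Tp by (simp add: powr_divide)
  qed
  have S: "(\<Sum>t<T. (1 - real t / real T) powr q) = (\<Sum>t<T. x t powr q) / real T powr q"
    by (simp add: eq sum_divide_distrib)
  have xs: "x (Suc t) + 1 = x t" for t by (simp add: x_def)
  have tel: "(\<Sum>t<T. F t - F (Suc t)) = real T powr (q+1)"
    by (subst sum_lessThan_telescope') (simp add: F_def x_def)
  have step: "(q+1) * x (Suc t) powr q \<le> F t - F (Suc t) \<and> F t - F (Suc t) \<le> (q+1) * x t powr q"
    if "t < T" for t
  proof -
    have "x (Suc t) \<ge> 0" using that by (simp add: x_def)
    from mvt_pow[OF this q] show ?thesis unfolding F_def xs by simp
  qed
  have lo: "real T powr (q+1) \<le> (q+1) * (\<Sum>t<T. x t powr q)"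
    unfolding tel[symmetric] sum_distrib_left using step by (intro sum_mono) auto
  have up1: "(q+1) * (\<Sum>t<T. x (Suc t) powr q) \<le> real T powr (q+1)"
    unfolding tel[symmetric] sum_distrib_left using step by (intro sum_mono) auto
  have tel2: "(\<Sum>t<T. x t powr q - x (Suc t) powr q) = real T powr q"
    by (subst sum_lessThan_telescope'[where f="\<lambda>t. x t powr q"]) (simp add: x_def)
  have up: "(\<Sum>t<T. x t powr q) \<le> real T powr (q+1) / (q+1) + real T powr q"
  proof -
    have "(\<Sum>t<T. x t powr q) = (\<Sum>t<T. x (Suc t) powr q) + real T powr q"
      using tel2 by (simp add: sum_subtractf)
    moreover have "(\<Sum>t<T. x (Suc t) powr q) \<le> real T powr (q+1) / (q+1)"
      using up1 q by (simp add: field_simps)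
    ultimately show ?thesis by simp
  qed
  have Tq: "real T powr q > 0" using Tp by simp
  have TT: "real T powr (q+1) = real T * real T powr q" using Tp by (simp add: powr_add)
  have "real T / (q+1) \<le> (\<Sum>t<T. x t powr q) / real T powr q"
    using lo q Tq unfolding TT by (simp add: field_simps)
  moreover have "(\<Sum>t<T. x t powr q) / real T powr q \<le> real T / (q+1) + 1"
    using up q Tq unfolding TT by (simp add: field_simps)
  ultimately show ?thesis unfolding S by simp
qed

lemma alg1:
  fixes e M b T X Y :: real
  shows "e > 0 \<Longrightarrow> M > 0 \<Longrightarrow> b > 0 \<Longrightarrow> T > 0 \<Longrightarrow>
    (T * X / e + Y) / (b * T * M) = X / (e * M * b) + Y / (M * b * T)"
  by (simp add: field_simps)

lemma alg2:
  fixes f e T h2 B C :: real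
  shows "f \<noteq> 0 \<Longrightarrow> e \<noteq> 0 \<Longrightarrow>
    f * (T * h2 + B * (T / f + 1) + C * (T / e + 1)) = T * (f * e * h2 + e * B + f * C) / e + f * (B + C)"
  by (simp add: field_simps)

lemma part_poly:
  fixes hmin hmax p :: real
  assumes p: "0 < p" and h: "0 \<le> hmin" "hmin \<le> hmax"
    and s0: "(\<Sum>t<T. poly_lr hmin hmax p T t) \<noteq> 0"
  shows "B_T (poly_lr hmin hmax p T) T \<le> (p + 1) / ((p * hmin + hmax) * real T)
        \<and> V_T (poly_lr hmin hmax p T) b T
            \<le> (2 * p\<^sup>2 * hmin\<^sup>2 + 2 * p * hmin * hmax + (p + 1) * hmax\<^sup>2)
                / ((2 * p + 1) * (p * hmin + hmax) * real b)
              + (p + 1) * (hmax\<^sup>2 - hmin\<^sup>2) / ((p * hmin + hmax) * real b * real T)"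
proof -
  define d where "d = hmax - hmin"
  define u where "u = (\<lambda>t::nat. (1 - real t / real T) powr p)"
  define U1 where "U1 = (\<Sum>t<T. u t)"
  define U2 where "U2 = (\<Sum>t<T. (1 - real t / real T) powr (2 * p))"
  define M where "M = p * hmin + hmax"
  have d0: "d \<ge> 0" using h by (simp add: d_def)
  have T: "T \<ge> 1" using s0 by (cases T) auto
  have Tp: "real T > 0" using T by simp
  have lr: "poly_lr hmin hmax p T t = d * u t + hmin" for t
    by (simp add: poly_lr_def d_def u_def)
  have S1: "(\<Sum>t<T. poly_lr hmin hmax p T t) = d * U1 + real T * hmin"
    by (simp add: lr U1_def sum.distrib sum_distrib_left)
  have usq: "(u t)\<^sup>2 = (1 - real t / real T) powr (2 * p)" for t
    by (simp only: u_def power2_eq_square mult_2 powr_add)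
  have S2: "(\<Sum>t<T. (poly_lr hmin hmax p T t)\<^sup>2) = d\<^sup>2 * U2 + 2 * d * hmin * U1 + real T * hmin\<^sup>2"
  proof -
    have "(poly_lr hmin hmax p T t)\<^sup>2 = d\<^sup>2 * (u t)\<^sup>2 + 2 * d * hmin * u t + hmin\<^sup>2" for t
      by (simp add: lr power2_eq_square algebra_simps)
    then show ?thesis
      by (simp add: U1_def U2_def usq sum.distrib sum_distrib_left)
  qed
  have b1: "real T / (p+1) \<le> U1" "U1 \<le> real T / (p+1) + 1"
    using powsum_bounds[OF p T] by (simp_all add: U1_def u_def)
  have b2: "U2 \<le> real T / (2*p+1) + 1"
    using powsum_bounds[of "2*p" T] p T by (simp add: U2_def)
  have hmaxp: "hmax > 0"
  proof (rule ccontr)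
    assume "\<not> hmax > 0"
    then have "hmax = 0" "hmin = 0" using h by auto
    then show False using s0 by (simp add: poly_lr_def)
  qed
  have Mp: "M > 0" using p h hmaxp by (simp add: M_def add_nonneg_pos)
  have Dlow: "real T * M / (p+1) \<le> d * U1 + real T * hmin"
  proof -
    have "d * (real T / (p+1)) \<le> d * U1" using b1 d0 by (intro mult_left_mono) auto
    moreover have "real T * M / (p+1) = d * (real T / (p+1)) + real T * hmin"
      using p by (simp add: M_def d_def field_simps)
    ultimately show ?thesis by simp
  qed
  have Dlp: "real T * M / (p+1) > 0" using Tp Mp p by simp
  have B: "B_T (poly_lr hmin hmax p T) T \<le> (p + 1) / ((p * hmin + hmax) * real T)"
  proof -
    have "1 / (d * U1 + real T * hmin) \<le> 1 / (real T * M / (p+1))"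
    proof -
      have Dp: "d * U1 + real T * hmin > 0" using Dlow Dlp by linarith
      show ?thesis by (rule divide_left_mono[OF Dlow _ mult_pos_pos[OF Dp Dlp]]) simp
    qed
    also have "\<dots> = (p + 1) / ((p * hmin + hmax) * real T)"
      by (simp add: M_def mult.commute)
    finally show ?thesis unfolding B_T_def S1 .
  qed
  show ?thesis
  proof (cases "b = 0")
    case True then show ?thesis using B by (simp add: V_T_def)
  next
    case False
    then have bp: "real b > 0" by simp
    define N' where "N' = real T * hmin\<^sup>2 + 2 * d * hmin * (real T / (p+1) + 1) + d\<^sup>2 * (real T / (2*p+1) + 1)"
    have U1p: "U1 \<ge> 0" using b1 Tp p by (smt (verit) divide_nonneg_pos)
    have U2p: "U2 \<ge> 0" unfolding U2_def by (intro sum_nonneg) simp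
    have Nle: "d\<^sup>2 * U2 + 2 * d * hmin * U1 + real T * hmin\<^sup>2 \<le> N'"
    proof -
      have "d\<^sup>2 * U2 \<le> d\<^sup>2 * (real T / (2*p+1) + 1)" using b2 by (intro mult_left_mono) auto
      moreover have "2 * d * hmin * U1 \<le> 2 * d * hmin * (real T / (p+1) + 1)"
        using b1 d0 h by (intro mult_left_mono) auto
      ultimately show ?thesis unfolding N'_def by simp
    qed
    have N0: "0 \<le> d\<^sup>2 * U2 + 2 * d * hmin * U1 + real T * hmin\<^sup>2"
      using d0 h U1p U2p by simp
    have "V_T (poly_lr hmin hmax p T) b T = (d\<^sup>2 * U2 + 2 * d * hmin * U1 + real T * hmin\<^sup>2) / (real b * (d * U1 + real T * hmin))"
      unfolding V_T_def S1 S2 ..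
    also have "\<dots> \<le> N' / (real b * (real T * M / (p+1)))"
      using Nle N0 Dlow Dlp bp by (intro frac_le mult_left_mono mult_pos_pos) auto
    also have "\<dots> = (2 * p\<^sup>2 * hmin\<^sup>2 + 2 * p * hmin * hmax + (p + 1) * hmax\<^sup>2)
                / ((2 * p + 1) * (p * hmin + hmax) * real b)
              + (p + 1) * (hmax\<^sup>2 - hmin\<^sup>2) / ((p * hmin + hmax) * real b * real T)"
    proof -
      have M': "p * hmin + hmax = M" by (simp add: M_def)
      have "N' / (real b * (real T * M / (p+1))) = (p+1) * N' / (real b * real T * M)"
        using p by (simp add: field_simps)
      also have "(p+1) * N' = real T * (2 * p\<^sup>2 * hmin\<^sup>2 + 2 * p * hmin * hmax + (p + 1) * hmax\<^sup>2) / (2 * p + 1)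
                 + (p + 1) * (hmax\<^sup>2 - hmin\<^sup>2)"
      proof -
        have e0: "2 * p + 1 \<noteq> 0" "p + 1 \<noteq> 0" using p by auto
        have Q: "(p+1)*(2*p+1)*hmin\<^sup>2 + (2*p+1)*(2*d*hmin) + (p+1)*d\<^sup>2
                 = 2 * p\<^sup>2 * hmin\<^sup>2 + 2 * p * hmin * hmax + (p + 1) * hmax\<^sup>2"
          unfolding d_def power2_eq_square by algebra
        have R: "2 * d * hmin + d\<^sup>2 = hmax\<^sup>2 - hmin\<^sup>2"
          unfolding d_def power2_eq_square by algebra
        have "(p+1) * N' = real T * ((p+1)*(2*p+1)*hmin\<^sup>2 + (2*p+1)*(2*d*hmin) + (p+1)*d\<^sup>2) / (2*p+1) + (p+1)*(2*d*hmin + d\<^sup>2)"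
          unfolding N'_def by (rule alg2[OF e0(2) e0(1)])
        then show ?thesis unfolding Q R .
      qed
      finally show ?thesis unfolding M'
        by (rule trans) (rule alg1[OF _ Mp bp Tp], use p in simp)
    qed
    finally show ?thesis using B by simp
  qed
qed





lemma avg_grad:
  fixes fs :: "nat \<Rightarrow> 'a::euclidean_space \<Rightarrow> real"
  assumes d: "\<forall>i<n. \<forall>x. fs i differentiable (at x)"
  shows "((\<lambda>\<theta>. (1 / real n) * (\<Sum>i<n. fs i \<theta>)) has_derivative
           (\<lambda>h. ((1 / real n) *\<^sub>R (\<Sum>i<n. grad (fs i) x)) \<bullet> h)) (at x)"
proof -
  have "((\<lambda>\<theta>. \<Sum>i<n. fs i \<theta>) has_derivative (\<lambda>h. \<Sum>i<n. grad (fs i) x \<bullet> h)) (at x)"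
    using d by (intro has_derivative_sum) (auto intro: grad_has_derivative)
  then have "((\<lambda>\<theta>. (1 / real n) * (\<Sum>i<n. fs i \<theta>)) has_derivative (\<lambda>h. (1 / real n) * (\<Sum>i<n. grad (fs i) x \<bullet> h))) (at x)"
    by (rule has_derivative_mult_right)
  moreover have "(\<lambda>h. (1 / real n) * (\<Sum>i<n. grad (fs i) x \<bullet> h)) = (\<lambda>h. ((1 / real n) *\<^sub>R (\<Sum>i<n. grad (fs i) x)) \<bullet> h)"
    by (simp add: inner_sum_left)
  ultimately show ?thesis by simp
qed

theorem theorem1:
  fixes P :: "'w measure" and D :: "'b measure"
    and n b :: nat
    and fs :: "nat \<Rightarrow> 'a::euclidean_space \<Rightarrow> real" and L :: "nat \<Rightarrow> real"
    and G :: "'b \<Rightarrow> 'a \<Rightarrow> 'a" and \<sigma> :: real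
    and \<xi> :: "nat \<Rightarrow> nat \<Rightarrow> 'w \<Rightarrow> 'b"
    and \<theta>0 :: 'a and \<eta> :: "nat \<Rightarrow> real" and \<eta>min \<eta>max :: real
  defines "f \<equiv> (\<lambda>\<theta>. (1 / real n) * (\<Sum>i<n. fs i \<theta>))"
    and "Lbar \<equiv> (1 / real n) * (\<Sum>i<n. L i)"
    and "fstar \<equiv> (1 / real n) * (\<Sum>i<n. Inf (range (fs i)))"
  assumes P: "prob_space P"
    and n: "n \<ge> 1"
    and A1: "\<forall>i<n. L i > 0 \<and> L_smooth (fs i) (L i) \<and> bdd_below (range (fs i))"
    and sigma: "\<sigma> \<ge> 0"
    and G_meas: "(\<lambda>(x, \<theta>). G x \<theta>) \<in> borel_measurable (D \<Otimes>\<^sub>M borel)"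
    and A2_unbiased: "\<forall>\<theta>. integrable D (\<lambda>x. G x \<theta>) \<and> (\<integral>x. G x \<theta> \<partial>D) = grad f \<theta>"
    and A2_var: "\<forall>\<theta>. integrable D (\<lambda>x. (norm (G x \<theta> - grad f \<theta>))\<^sup>2)
                 \<and> (\<integral>x. (norm (G x \<theta> - grad f \<theta>))\<^sup>2 \<partial>D) \<le> \<sigma>\<^sup>2"
    and b: "b \<ge> 1"
    and A3_indep: "prob_space.indep_vars P (\<lambda>_. D) (\<lambda>(t, i). \<xi> t i) (UNIV \<times> {..<b})"
    and A3_distr: "\<forall>t. \<forall>i<b. distr P D (\<xi> t i) = D"
    and lr_range: "\<forall>t. \<eta>min \<le> \<eta> t \<and> \<eta> t \<le> \<eta>max"
    and lr_min: "0 \<le> \<eta>min" and lr_max: "\<eta>max < 2 / Lbar"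
    and lr_noninc: "\<forall>t. \<eta> (Suc t) \<le> \<eta> t"
  shows
    "(\<forall>T. (\<Sum>t<T. \<eta> t) \<noteq> 0 \<longrightarrow>
        (MIN t\<in>{..<T}. \<integral>\<^sup>+\<omega>. ennreal ((norm (grad f (sgd_iter \<theta>0 \<eta> b G \<xi> t \<omega>)))\<^sup>2) \<partial>P)
        \<le> ennreal (2 * (f \<theta>0 - fstar) / (2 - Lbar * \<eta>max) * B_T \<eta> T
                   + Lbar * \<sigma>\<^sup>2 / (2 - Lbar * \<eta>max) * V_T \<eta> b T))
   \<and> (\<forall>hmax T. 0 \<le> hmax \<and> (\<Sum>t<T. const_lr hmax t) \<noteq> 0 \<longrightarrow>
        B_T (const_lr hmax) T \<le> 1 / (hmax * real T)
        \<and> V_T (const_lr hmax) b T \<le> hmax / real b)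
   \<and> (\<forall>hmax T. 0 \<le> hmax \<and> (\<Sum>t<T. dimin_lr hmax t) \<noteq> 0 \<longrightarrow>
        B_T (dimin_lr hmax) T \<le> 1 / (2 * hmax * (sqrt (real T + 1) - 1))
        \<and> V_T (dimin_lr hmax) b T
            \<le> hmax * (1 + ln (real T)) / (2 * real b * (sqrt (real T + 1) - 1)))
   \<and> (\<forall>hmin hmax E. let K = nat \<lceil>real n / real b\<rceil>; T = K * E in
        0 \<le> hmin \<and> hmin \<le> hmax \<and> (\<Sum>t<T. cosine_lr hmin hmax K E t) \<noteq> 0 \<longrightarrow>
        B_T (cosine_lr hmin hmax K E) T \<le> 2 / ((hmin + hmax) * real T)
        \<and> V_T (cosine_lr hmin hmax K E) b T
            \<le> (3 * hmin\<^sup>2 + 2 * hmin * hmax + 3 * hmax\<^sup>2) / (4 * (hmin + hmax) * real b)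
              + (hmax - hmin) * real K / (real b * real T))
   \<and> (\<forall>hmin hmax p T. 0 < p \<and> 0 \<le> hmin \<and> hmin \<le> hmax
          \<and> (\<Sum>t<T. poly_lr hmin hmax p T t) \<noteq> 0 \<longrightarrow>
        B_T (poly_lr hmin hmax p T) T \<le> (p + 1) / ((p * hmin + hmax) * real T)
        \<and> V_T (poly_lr hmin hmax p T) b T
            \<le> (2 * p\<^sup>2 * hmin\<^sup>2 + 2 * p * hmin * hmax + (p + 1) * hmax\<^sup>2)
                / ((2 * p + 1) * (p * hmin + hmax) * real b)
              + (p + 1) * (hmax\<^sup>2 - hmin\<^sup>2) / ((p * hmin + hmax) * real b * real T))"
proof -
  note fd = \<open>f \<equiv> (\<lambda>\<theta>. (1 / real n) * (\<Sum>i<n. fs i \<theta>))\<close>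
  note Ld = \<open>Lbar \<equiv> (1 / real n) * (\<Sum>i<n. L i)\<close>
  note sd = \<open>fstar \<equiv> (1 / real n) * (\<Sum>i<n. Inf (range (fs i)))\<close>
  have npos: "real n > 0" using n by simp
  have dif: "\<forall>i<n. \<forall>x. fs i differentiable (at x)" using A1 by (auto simp: L_smooth_def)
  have lipi: "\<forall>i<n. \<forall>x y. norm (grad (fs i) x - grad (fs i) y) \<le> L i * norm (x - y)"
    using A1 by (auto simp: L_smooth_def)
  have gf: "grad f x = (1 / real n) *\<^sub>R (\<Sum>i<n. grad (fs i) x)" for x
    unfolding fd by (rule grad_unique, rule avg_grad[OF dif])
  have fdiff: "\<forall>x. f differentiable (at x)"
    unfolding fd using avg_grad[OF dif] by (auto simp: differentiable_def)
  have flip: "\<forall>x y. norm (grad f x - grad f y) \<le> Lbar * norm (x - y)"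
  proof (intro allI)
    fix x y
    have "grad f x - grad f y = (1 / real n) *\<^sub>R (\<Sum>i<n. grad (fs i) x - grad (fs i) y)"
      unfolding gf by (simp add: sum_subtractf scaleR_diff_right)
    then have "norm (grad f x - grad f y) = (1 / real n) * norm (\<Sum>i<n. grad (fs i) x - grad (fs i) y)"
      using npos by simp
    also have "\<dots> \<le> (1 / real n) * (\<Sum>i<n. norm (grad (fs i) x - grad (fs i) y))"
      using npos by (intro mult_left_mono norm_sum) auto
    also have "\<dots> \<le> (1 / real n) * (\<Sum>i<n. L i * norm (x - y))"
      using npos lipi by (intro mult_left_mono sum_mono) auto
    also have "\<dots> = Lbar * norm (x - y)" unfolding Ld by (simp add: sum_distrib_right)
    finally show "norm (grad f x - grad f y) \<le> Lbar * norm (x - y)" .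
  qed
  have fmin: "\<forall>x. fstar \<le> f x"
  proof
    fix x
    have "(\<Sum>i<n. Inf (range (fs i))) \<le> (\<Sum>i<n. fs i x)"
      using A1 by (intro sum_mono cINF_lower) auto
    then show "fstar \<le> f x" unfolding sd fd using npos by (intro mult_left_mono) auto
  qed
  have Lpos: "Lbar > 0"
  proof -
    have "(\<Sum>i<n. L i) > 0" using A1 n by (intro sum_pos) (auto simp: lessThan_empty_iff)
    then show ?thesis unfolding Ld using npos by simp
  qed
  interpret S: sgd P D b G \<xi> f Lbar fstar \<sigma>
    by (rule sgd.intro[OF P b G_meas A2_unbiased A2_var A3_indep A3_distr fdiff flip fmin]) (use Lpos in simp)
  have eta: "\<forall>t. 0 \<le> \<eta> t \<and> \<eta> t \<le> \<eta>max" using lr_range lr_min by (meson order_trans)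
  have lm: "Lbar * \<eta>max < 2" using lr_max Lpos by (simp add: field_simps)
  have part1: "\<forall>T. (\<Sum>t<T. \<eta> t) \<noteq> 0 \<longrightarrow>
        (MIN t\<in>{..<T}. \<integral>\<^sup>+\<omega>. ennreal ((norm (grad f (sgd_iter \<theta>0 \<eta> b G \<xi> t \<omega>)))\<^sup>2) \<partial>P)
        \<le> ennreal (2 * (f \<theta>0 - fstar) / (2 - Lbar * \<eta>max) * B_T \<eta> T
                   + Lbar * \<sigma>\<^sup>2 / (2 - Lbar * \<eta>max) * V_T \<eta> b T)"
    using S.main_bound[OF eta lm] by blast
  have K1: "nat \<lceil>real n / real b\<rceil> \<ge> 1"
  proof -
    have "real n / real b > 0" using n b by simp
    then have "0 < real_of_int \<lceil>real n / real b\<rceil>"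
      using le_of_int_ceiling[of "real n / real b"] by linarith
    then have "0 < \<lceil>real n / real b\<rceil>" by simp
    then have "\<lceil>real n / real b\<rceil> \<ge> 1" by arith
    from nat_mono[OF this] show ?thesis by simp
  qed
  show ?thesis
    apply (intro conjI)
    subgoal by (rule part1)
    subgoal using part_const by blast
    subgoal using part_dimin by blast
    subgoal unfolding Let_def using part_cos[OF K1] by blast
    subgoal using part_poly by blast
    done
qed


end
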